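(* In the setting below, if the $\tilde P$-$s$ chain is locally-$s$-recurrent, then the $P$-$\nu$ chain is locally-$\nu$-recurrent.
   Context: $(\mathcal{X},\mathcal{B})$ and $(\Theta,\mathcal{C})$ are Polish spaces with Borel $\sigma$-algebras; $P(\cdot\mid\theta)$ is a Markov kernel; $\nu$ is a $\sigma$-finite measure on $\Theta$; the marginal $M(B)=\int P(B\mid\theta)\nu(d\theta)$ is $\sigma$-finite; $Q(d\theta\mid x)$ is a Markov kernel with $P(dx\mid\theta)\nu(d\theta)=Q(d\theta\mid x)M(dx)$. The $P$-$\nu$ chain is the Markov chain on $\Theta$ with transition $R(C\mid\eta)=\int Q(C\mid x)P(dx\mid\eta)$. Let $t:\Theta\to[0,\infty)$ be measurable and $s(A)=\nu(t^{-1}(A))$. Assume there are disjoint Borel sets $A_i$, $i\ge1$, covering $[0,\infty)$ with $0<\nu(t^{-1}(A_i))<\infty$. Let $\pi(d\theta\mid a)$ be a Markov kernel with $\int f_2(t(\theta))f_1(\theta)\nu(d\theta)=\int_0^\infty f_2(a)\int f_1(\theta)\pi(d\theta\mid a)\,s(da)$ for all nonnegative measurable $f_1,f_2$. Set $\tilde P(dx\mid a)=\int P(dx\mid\theta)\pi(d\theta\mid a)$ and let $\tilde Q(da\mid x)$ satisfy $\tilde P(dx\mid a)s(da)=\tilde Q(da\mid x)M(dx)$. The $\tilde P$-$s$ chain is the Markov chain on $[0,\infty)$ with transition $\tilde R(da\mid b)=\int\tilde Q(da\mid x)\tilde P(dx\mid b)$. For a Markov chain $W=(W_0,W_1,\dots)$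 on a space with $\sigma$-finite measure $\mu$: a measurable set $C$ is $\mu$-proper if $0<\mu(C)<\infty$; $\tau_C$ is the first $n\ge1$ with $W_n\in C$ ($\infty$ if none) and $E_C=\{\tau_C<\infty\}$; a $\mu$-proper $C$ is locally-$\mu$-recurrent if $\{w_0\in C: P_{w_0}(E_C)<1\}$ has $\mu$-measure zero, where $P_{w_0}$ is the law of the chain started at $w_0$; the chain is locally-$\mu$-recurrent if every $\mu$-proper set is locally-$\mu$-recurrent. *)

theory Defs
  imports "HOL-Probability.Probability"
begin

definition nonneg_reals :: "real measure" where
  "nonneg_reals = restrict_space borel {0..}"

text \<open>Law (on the path space of sequences indexed by nat) of the Markov chain on the
  measurable space Om with transition kernel K, started at w0 (so W_0 = w0 a.s. and
  W_(n+1) is distributed as K (W_n) given the past); constructed via the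
  Ionescu-Tulcea theorem from the library.\<close>
definition chain_law :: "'a measure \<Rightarrow> ('a \<Rightarrow> 'a measure) \<Rightarrow> 'a \<Rightarrow> (nat \<Rightarrow> 'a) measure" where
  "chain_law Om K w0 =
     projective_family.lim UNIV
       (Ionescu_Tulcea.CI (\<lambda>i \<omega>. if i = 0 then return Om w0 else K (\<omega> (i - 1))) (\<lambda>_. Om))
       (\<lambda>_. Om)"

definition return_event :: "'a measure \<Rightarrow> 'a set \<Rightarrow> (nat \<Rightarrow> 'a) set" where
  "return_event Om C = {\<omega> \<in> space (PiM UNIV (\<lambda>_. Om)). \<exists>n\<ge>1. \<omega> n \<in> C}"

definition proper_set :: "'a measure \<Rightarrow> 'a set \<Rightarrow> bool" where
  "proper_set mu C \<longleftrightarrow> C \<in> sets mu \<and> 0 < emeasure mu C \<and> emeasure mu C < \<infinity>"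

definition locally_recurrent_set ::
    "'a measure \<Rightarrow> ('a \<Rightarrow> 'a measure) \<Rightarrow> 'a measure \<Rightarrow> 'a set \<Rightarrow> bool" where
  "locally_recurrent_set Om K mu C \<longleftrightarrow> proper_set mu C \<and>
     (AE w0 in mu. w0 \<in> C \<longrightarrow> \<not> (emeasure (chain_law Om K w0) (return_event Om C) < 1))"

definition locally_recurrent ::
    "'a measure \<Rightarrow> ('a \<Rightarrow> 'a measure) \<Rightarrow> 'a measure \<Rightarrow> bool" where
  "locally_recurrent Om K mu \<longleftrightarrow>
     (\<forall>C. proper_set mu C \<longrightarrow> locally_recurrent_set Om K mu C)"

end

theory Submission
  imports Defs
begin

definition vr :: "'a measure \<Rightarrow> ('a \<Rightarrow> ennreal) \<Rightarrow> real" where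
  "vr N f = enn2real (\<integral>\<^sup>+x. f x * f x \<partial>N) - (enn2real (\<integral>\<^sup>+x. f x \<partial>N))^2"

lemma real_cov_bound:
  fixes F G :: "'a \<Rightarrow> real"
  assumes N: "prob_space N" and F[measurable]: "F \<in> borel_measurable N" and G[measurable]: "G \<in> borel_measurable N"
    and Fb: "\<And>x. 0 \<le> F x \<and> F x \<le> 1" and Gb: "\<And>x. 0 \<le> G x \<and> G x \<le> 1" and lam: "lam > 0"
  shows "2 * lam * ((\<integral>x. F x * G x \<partial>N) - (\<integral>x. F x \<partial>N) * (\<integral>x. G x \<partial>N))
     \<le> lam^2 * ((\<integral>x. F x * F x \<partial>N) - (\<integral>x. F x \<partial>N)^2) + ((\<integral>x. G x * G x \<partial>N) - (\<integral>x. G x \<partial>N)^2)"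
proof -
  interpret prob_space N by (rule N)
  define a where "a = (\<integral>x. F x \<partial>N)"
  define b where "b = (\<integral>x. G x \<partial>N)"
  have iF: "integrable N F" by (rule integrable_const_bound[where B=1]) (use Fb in auto)
  have iG: "integrable N G" by (rule integrable_const_bound[where B=1]) (use Gb in auto)
  have iFG: "integrable N (\<lambda>x. F x * G x)" by (rule integrable_const_bound[where B=1]) (use Fb Gb in \<open>auto intro: mult_le_one\<close>)
  have iFF: "integrable N (\<lambda>x. F x * F x)" by (rule integrable_const_bound[where B=1]) (use Fb in \<open>auto intro: mult_le_one\<close>)
  have iGG: "integrable N (\<lambda>x. G x * G x)" by (rule integrable_const_bound[where B=1]) (use Gb in \<open>auto intro: mult_le_one\<close>)
  have "0 \<le> (\<integral>x. (lam * (F x - a) - (G x - b))^2 \<partial>N)" by simp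
  also have "(\<integral>x. (lam * (F x - a) - (G x - b))^2 \<partial>N) =
     (\<integral>x. lam^2 * (F x * F x) + (G x * G x) - 2 * lam * (F x * G x) + (2*lam*b - 2*lam^2*a) * F x + (2*lam*a - 2*b) * G x + (lam*a - b)^2 \<partial>N)"
    by (intro Bochner_Integration.integral_cong) (auto simp: power2_eq_square algebra_simps)
  also have "\<dots> = lam^2 * (\<integral>x. F x * F x \<partial>N) + (\<integral>x. G x * G x \<partial>N) - 2 * lam * (\<integral>x. F x * G x \<partial>N)
      + (2*lam*b - 2*lam^2*a) * a + (2*lam*a - 2*b) * b + (lam*a - b)^2"
    using iF iG iFG iFF iGG by (simp add: a_def b_def prob_space)
  finally show ?thesis unfolding a_def[symmetric] b_def[symmetric]
    by (simp add: power2_eq_square algebra_simps)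
qed

lemma real_var_nonneg:
  fixes F :: "'a \<Rightarrow> real"
  assumes N: "prob_space N" and F[measurable]: "F \<in> borel_measurable N"
    and Fb: "\<And>x. 0 \<le> F x \<and> F x \<le> 1"
  shows "(\<integral>x. F x \<partial>N)^2 \<le> (\<integral>x. F x * F x \<partial>N)"
proof -
  interpret prob_space N by (rule N)
  define a where "a = (\<integral>x. F x \<partial>N)"
  have iF: "integrable N F" by (rule integrable_const_bound[where B=1]) (use Fb in auto)
  have iFF: "integrable N (\<lambda>x. F x * F x)" by (rule integrable_const_bound[where B=1]) (use Fb in \<open>auto intro: mult_le_one\<close>)
  have "0 \<le> (\<integral>x. (F x - a)^2 \<partial>N)" by simp
  also have "(\<integral>x. (F x - a)^2 \<partial>N) = (\<integral>x. (F x * F x) - 2 * a * F x + a^2 \<partial>N)"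
    by (intro Bochner_Integration.integral_cong) (auto simp: power2_eq_square algebra_simps)
  also have "\<dots> = (\<integral>x. F x * F x \<partial>N) - 2 * a * a + a^2"
    using iF iFF by (simp add: a_def prob_space)
  finally show ?thesis unfolding a_def[symmetric] by (simp add: power2_eq_square)
qed

lemma enn_real_parts:
  fixes f :: "'a \<Rightarrow> ennreal"
  assumes N: "prob_space N" and f[measurable]: "f \<in> borel_measurable N" and fb: "\<And>x. f x \<le> 1"
  shows "(\<integral>\<^sup>+x. f x \<partial>N) = ennreal (\<integral>x. enn2real (f x) \<partial>N)"
    and "integrable N (\<lambda>x. enn2real (f x))"
proof -
  interpret prob_space N by (rule N)
  have fe: "f x = ennreal (enn2real (f x))" for x using fb[of x]
    by (metis ennreal_enn2real ennreal_one_less_top le_less_trans less_top)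
  show i: "integrable N (\<lambda>x. enn2real (f x))"
    by (rule integrable_const_bound[where B=1]) (auto simp: enn2real_leI fb)
  have "(\<integral>\<^sup>+x. f x \<partial>N) = (\<integral>\<^sup>+x. ennreal (enn2real (f x)) \<partial>N)"
    by (subst fe) simp
  also have "\<dots> = ennreal (\<integral>x. enn2real (f x) \<partial>N)"
    by (rule nn_integral_eq_integral[OF i]) auto
  finally show "(\<integral>\<^sup>+x. f x \<partial>N) = ennreal (\<integral>x. enn2real (f x) \<partial>N)" .
qed

lemma vr_props:
  fixes f :: "'a \<Rightarrow> ennreal"
  assumes N: "prob_space N" and f[measurable]: "f \<in> borel_measurable N" and fb: "\<And>x. f x \<le> 1"
  shows "vr N f \<ge> 0" and "(\<integral>\<^sup>+x. f x * f x \<partial>N) = (\<integral>\<^sup>+x. f x \<partial>N) * (\<integral>\<^sup>+x. f x \<partial>N) + ennreal (vr N f)"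
proof -
  define F where "F x = enn2real (f x)" for x
  have Fb: "0 \<le> F x \<and> F x \<le> 1" for x unfolding F_def using fb[of x] by (auto intro: enn2real_leI)
  have ffb: "f x * f x \<le> 1" for x using fb[of x] by (metis mult_le_one zero_le)
  have e1: "(\<integral>\<^sup>+x. f x \<partial>N) = ennreal (\<integral>x. F x \<partial>N)"
    unfolding F_def by (rule enn_real_parts[OF N f fb])
  have e2: "(\<integral>\<^sup>+x. f x * f x \<partial>N) = ennreal (\<integral>x. F x * F x \<partial>N)"
    unfolding F_def using enn_real_parts(1)[OF N _ ffb] by (simp add: enn2real_mult)
  have pos: "0 \<le> (\<integral>x. F x \<partial>N)" by (rule integral_nonneg_AE) (use Fb in auto)
  have v: "vr N f = (\<integral>x. F x * F x \<partial>N) - (\<integral>x. F x \<partial>N)^2"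
    unfolding vr_def e1 e2 using pos by (simp add: integral_nonneg_AE Fb)
  have vn: "(\<integral>x. F x \<partial>N)^2 \<le> (\<integral>x. F x * F x \<partial>N)"
    by (rule real_var_nonneg[OF N _ Fb]) (simp add: F_def)
  show "vr N f \<ge> 0" using v vn by simp
  show "(\<integral>\<^sup>+x. f x * f x \<partial>N) = (\<integral>\<^sup>+x. f x \<partial>N) * (\<integral>\<^sup>+x. f x \<partial>N) + ennreal (vr N f)"
    unfolding e1 e2 v using pos vn
    by (simp add: ennreal_mult[symmetric] ennreal_plus[symmetric] power2_eq_square del: ennreal_plus)
qed

lemma cov_bound:
  fixes f g :: "'a \<Rightarrow> ennreal"
  assumes N: "prob_space N" and f[measurable]: "f \<in> borel_measurable N" and fb: "\<And>x. f x \<le> 1"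
    and g[measurable]: "g \<in> borel_measurable N" and gb: "\<And>x. g x \<le> 1" and lam: "lam > 0"
  shows "(\<integral>\<^sup>+x. f x * g x \<partial>N) \<le> (\<integral>\<^sup>+x. f x \<partial>N) * (\<integral>\<^sup>+x. g x \<partial>N)
     + ennreal (lam / 2 * vr N f) + ennreal (1 / (2 * lam) * vr N g)"
proof -
  define F where "F x = enn2real (f x)" for x
  define G where "G x = enn2real (g x)" for x
  have Fb: "0 \<le> F x \<and> F x \<le> 1" for x unfolding F_def using fb[of x] by (auto intro: enn2real_leI)
  have Gb: "0 \<le> G x \<and> G x \<le> 1" for x unfolding G_def using gb[of x] by (auto intro: enn2real_leI)
  have fgb: "f x * g x \<le> 1" for x using fb[of x] gb[of x] by (metis mult_le_one zero_le)
  have ffb: "f x * f x \<le> 1" for x using fb[of x] by (metis mult_le_one zero_le)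
  have ggb: "g x * g x \<le> 1" for x using gb[of x] by (metis mult_le_one zero_le)
  have e1: "(\<integral>\<^sup>+x. f x \<partial>N) = ennreal (\<integral>x. F x \<partial>N)"
    unfolding F_def by (rule enn_real_parts[OF N f fb])
  have e1g: "(\<integral>\<^sup>+x. g x \<partial>N) = ennreal (\<integral>x. G x \<partial>N)"
    unfolding G_def by (rule enn_real_parts[OF N g gb])
  have e2: "(\<integral>\<^sup>+x. f x * f x \<partial>N) = ennreal (\<integral>x. F x * F x \<partial>N)"
    unfolding F_def using enn_real_parts(1)[OF N _ ffb] by (simp add: enn2real_mult)
  have e2g: "(\<integral>\<^sup>+x. g x * g x \<partial>N) = ennreal (\<integral>x. G x * G x \<partial>N)"
    unfolding G_def using enn_real_parts(1)[OF N _ ggb] by (simp add: enn2real_mult)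
  have e3: "(\<integral>\<^sup>+x. f x * g x \<partial>N) = ennreal (\<integral>x. F x * G x \<partial>N)"
    unfolding F_def G_def using enn_real_parts(1)[OF N _ fgb] by (simp add: enn2real_mult)
  have pos: "0 \<le> (\<integral>x. F x \<partial>N)" by (rule integral_nonneg_AE) (use Fb in auto)
  have posg: "0 \<le> (\<integral>x. G x \<partial>N)" by (rule integral_nonneg_AE) (use Gb in auto)
  have v: "vr N f = (\<integral>x. F x * F x \<partial>N) - (\<integral>x. F x \<partial>N)^2"
    unfolding vr_def e1 e2 using pos by (simp add: integral_nonneg_AE Fb)
  have vg: "vr N g = (\<integral>x. G x * G x \<partial>N) - (\<integral>x. G x \<partial>N)^2"
    unfolding vr_def e1g e2g using posg by (simp add: integral_nonneg_AE Gb)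
  have vn: "vr N f \<ge> 0" "vr N g \<ge> 0" using vr_props(1)[OF N f fb] vr_props(1)[OF N g gb] by auto
  have c: "2 * lam * ((\<integral>x. F x * G x \<partial>N) - (\<integral>x. F x \<partial>N) * (\<integral>x. G x \<partial>N))
     \<le> lam^2 * vr N f + vr N g"
    unfolding v vg by (rule real_cov_bound[OF N _ _ Fb Gb lam]) (auto simp: F_def G_def)
  have c2: "(\<integral>x. F x * G x \<partial>N) \<le> (\<integral>x. F x \<partial>N) * (\<integral>x. G x \<partial>N) + lam / 2 * vr N f + 1 / (2 * lam) * vr N g"
  proof -
    have "2 * lam * ((\<integral>x. F x * G x \<partial>N) - (\<integral>x. F x \<partial>N) * (\<integral>x. G x \<partial>N))
        \<le> 2 * lam * (lam / 2 * vr N f + 1 / (2 * lam) * vr N g)"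
    proof -
      have "2 * lam * (lam / 2 * vr N f + 1 / (2 * lam) * vr N g) = lam^2 * vr N f + vr N g"
        using lam by (simp add: field_simps power2_eq_square)
      then show ?thesis using c by simp
    qed
    then show ?thesis using lam by (simp add: mult_le_cancel_left_pos)
  qed
  have "ennreal (\<integral>x. F x * G x \<partial>N) \<le> ennreal ((\<integral>x. F x \<partial>N) * (\<integral>x. G x \<partial>N) + lam / 2 * vr N f + 1 / (2 * lam) * vr N g)"
    using c2 by (rule ennreal_leI)
  also have "\<dots> = ennreal (\<integral>x. F x \<partial>N) * ennreal (\<integral>x. G x \<partial>N) + ennreal (lam / 2 * vr N f) + ennreal (1 / (2 * lam) * vr N g)"
    using pos posg vn lam by (subst ennreal_plus; simp add: ennreal_mult ennreal_plus)+
  finally show ?thesis unfolding e1 e1g e3 .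
qed

locale rchain =
  fixes Om :: "'a measure" and X :: "'b measure" and mu :: "'a measure" and M :: "'b measure"
    and P :: "'a \<Rightarrow> 'b measure" and Q :: "'b \<Rightarrow> 'a measure"
  assumes P_k: "P \<in> Om \<rightarrow>\<^sub>M prob_algebra X" and Q_k: "Q \<in> X \<rightarrow>\<^sub>M prob_algebra Om"
    and mu_sets: "sets mu = sets Om" and M_sets: "sets M = sets X"
    and joint: "\<forall>C\<in>sets Om. \<forall>B\<in>sets X. (\<integral>\<^sup>+w. indicator C w * emeasure (P w) B \<partial>mu) = (\<integral>\<^sup>+x. indicator B x * emeasure (Q x) C \<partial>M)"
begin

lemma P_sub[measurable]: "P \<in> Om \<rightarrow>\<^sub>M subprob_algebra X"
  using P_k by (rule measurable_prob_algebraD)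
lemma Q_sub[measurable]: "Q \<in> X \<rightarrow>\<^sub>M subprob_algebra Om"
  using Q_k by (rule measurable_prob_algebraD)

lemma sets_P: "w \<in> space Om \<Longrightarrow> sets (P w) = sets X"
  using measurable_space[OF P_k] by (auto simp: space_prob_algebra)
lemma prob_P: "w \<in> space Om \<Longrightarrow> prob_space (P w)"
  using measurable_space[OF P_k] by (auto simp: space_prob_algebra)
lemma sets_Q: "x \<in> space X \<Longrightarrow> sets (Q x) = sets Om"
  using measurable_space[OF Q_k] by (auto simp: space_prob_algebra)
lemma prob_Q: "x \<in> space X \<Longrightarrow> prob_space (Q x)"
  using measurable_space[OF Q_k] by (auto simp: space_prob_algebra)

lemma space_mu: "space mu = space Om" using mu_sets by (rule sets_eq_imp_space_eq)
lemma space_M: "space M = space X" using M_sets by (rule sets_eq_imp_space_eq)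

lemma mu_cong[measurable_cong]: "sets mu = sets Om" by (rule mu_sets)
lemma M_cong[measurable_cong]: "sets M = sets X" by (rule M_sets)

lemma joint1:
  assumes C[measurable]: "C \<in> sets Om" and phi: "phi \<in> borel_measurable X"
  shows "(\<integral>\<^sup>+w. indicator C w * (\<integral>\<^sup>+x. phi x \<partial>P w) \<partial>mu) = (\<integral>\<^sup>+x. phi x * emeasure (Q x) C \<partial>M)"
  using phi
proof (induction rule: borel_measurable_induct)
  case (cong f g)
  have "(\<integral>\<^sup>+w. indicator C w * (\<integral>\<^sup>+x. f x \<partial>P w) \<partial>mu) = (\<integral>\<^sup>+w. indicator C w * (\<integral>\<^sup>+x. g x \<partial>P w) \<partial>mu)"
    apply (intro nn_integral_cong)
    apply (subst nn_integral_cong[where v=g])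
    using cong by (auto simp: space_mu sets_eq_imp_space_eq[OF sets_P])
  moreover have "(\<integral>\<^sup>+x. f x * emeasure (Q x) C \<partial>M) = (\<integral>\<^sup>+x. g x * emeasure (Q x) C \<partial>M)"
    using cong by (auto simp: space_M intro!: nn_integral_cong)
  ultimately show ?case using cong by simp
next
  case (set A)
  have "(\<integral>\<^sup>+w. indicator C w * (\<integral>\<^sup>+x. indicator A x \<partial>P w) \<partial>mu) = (\<integral>\<^sup>+w. indicator C w * emeasure (P w) A \<partial>mu)"
    using set by (intro nn_integral_cong) (auto simp: space_mu sets_P)
  then show ?case using joint C set by (simp add: mult.commute)
next
  case (mult u c)
  note [measurable] = mult.hyps(2)
  have "(\<integral>\<^sup>+w. indicator C w * (\<integral>\<^sup>+x. c * u x \<partial>P w) \<partial>mu) = (\<integral>\<^sup>+w. c * (indicator C w * (\<integral>\<^sup>+x. u x \<partial>P w)) \<partial>mu)"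
    using mult by (intro nn_integral_cong) (auto simp: space_mu nn_integral_cmult measurable_cong_sets[OF sets_P refl] mult.left_commute)
  also have "\<dots> = c * (\<integral>\<^sup>+w. indicator C w * (\<integral>\<^sup>+x. u x \<partial>P w) \<partial>mu)"
    using mult by (intro nn_integral_cmult) measurable
  also have "\<dots> = c * (\<integral>\<^sup>+x. u x * emeasure (Q x) C \<partial>M)" using mult by simp
  also have "\<dots> = (\<integral>\<^sup>+x. c * u x * emeasure (Q x) C \<partial>M)"
    using mult C by (subst nn_integral_cmult[symmetric]) (auto simp: mult.assoc)
  finally show ?case .
next
  case (add u v)
  note [measurable] = \<open>u \<in> borel_measurable X\<close> \<open>v \<in> borel_measurable X\<close>
  have "(\<integral>\<^sup>+w. indicator C w * (\<integral>\<^sup>+x. v x + u x \<partial>P w) \<partial>mu) = (\<integral>\<^sup>+w. indicator C w * (\<integral>\<^sup>+x. v x \<partial>P w) + indicator C w * (\<integral>\<^sup>+x. u x \<partial>P w) \<partial>mu)"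
    using add by (intro nn_integral_cong) (auto simp: space_mu nn_integral_add measurable_cong_sets[OF sets_P refl] distrib_left)
  also have "\<dots> = (\<integral>\<^sup>+w. indicator C w * (\<integral>\<^sup>+x. v x \<partial>P w) \<partial>mu) + (\<integral>\<^sup>+w. indicator C w * (\<integral>\<^sup>+x. u x \<partial>P w) \<partial>mu)"
    by (rule nn_integral_add) measurable
  also have "\<dots> = (\<integral>\<^sup>+x. v x * emeasure (Q x) C \<partial>M) + (\<integral>\<^sup>+x. u x * emeasure (Q x) C \<partial>M)" using add by simp
  also have "\<dots> = (\<integral>\<^sup>+x. (v x + u x) * emeasure (Q x) C \<partial>M)"
    using add C by (subst nn_integral_add[symmetric]) (auto simp: distrib_right)
  finally show ?case .
next
  case (seq U)
  note [measurable] = seq.hyps(1)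
  have "(\<integral>\<^sup>+w. indicator C w * (\<integral>\<^sup>+x. (SUP i. U i) x \<partial>P w) \<partial>mu) = (\<integral>\<^sup>+w. (SUP i. indicator C w * (\<integral>\<^sup>+x. U i x \<partial>P w)) \<partial>mu)"
  proof (intro nn_integral_cong)
    fix w assume w: "w \<in> space mu"
    have "(\<integral>\<^sup>+x. (SUP i. U i) x \<partial>P w) = (\<integral>\<^sup>+x. (SUP i. U i x) \<partial>P w)"
      by (simp add: image_comp)
    also have "\<dots> = (SUP i. (\<integral>\<^sup>+x. U i x \<partial>P w))"
      using seq w by (intro nn_integral_monotone_convergence_SUP)
        (auto simp: space_mu measurable_cong_sets[OF sets_P refl])
    finally show "indicator C w * (\<integral>\<^sup>+x. (SUP i. U i) x \<partial>P w) = (SUP i. indicator C w * (\<integral>\<^sup>+x. U i x \<partial>P w))"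
      by (simp add: SUP_mult_left_ennreal)
  qed
  also have "\<dots> = (SUP i. (\<integral>\<^sup>+w. indicator C w * (\<integral>\<^sup>+x. U i x \<partial>P w) \<partial>mu))"
    using seq C apply (intro nn_integral_monotone_convergence_SUP)
     apply (auto intro!: mult_left_mono nn_integral_mono simp: incseq_def le_fun_def)
    done
  also have "\<dots> = (SUP i. (\<integral>\<^sup>+x. U i x * emeasure (Q x) C \<partial>M))" using seq by simp
  also have "\<dots> = (\<integral>\<^sup>+x. (SUP i. U i x * emeasure (Q x) C) \<partial>M)"
    using seq C apply (intro nn_integral_monotone_convergence_SUP[symmetric])
     apply (auto intro!: mult_right_mono simp: incseq_def le_fun_def)
    done
  also have "\<dots> = (\<integral>\<^sup>+x. (SUP i. U i) x * emeasure (Q x) C \<partial>M)"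
    by (simp add: SUP_mult_right_ennreal image_comp)
  finally show ?case .
qed

lemma joint2:
  assumes u: "u \<in> borel_measurable Om" and phi[measurable]: "phi \<in> borel_measurable X"
  shows "(\<integral>\<^sup>+w. u w * (\<integral>\<^sup>+x. phi x \<partial>P w) \<partial>mu) = (\<integral>\<^sup>+x. phi x * (\<integral>\<^sup>+w. u w \<partial>Q x) \<partial>M)"
  using u
proof (induction rule: borel_measurable_induct)
  case (cong f g)
  have "(\<integral>\<^sup>+w. f w * (\<integral>\<^sup>+x. phi x \<partial>P w) \<partial>mu) = (\<integral>\<^sup>+w. g w * (\<integral>\<^sup>+x. phi x \<partial>P w) \<partial>mu)"
    using cong(3) by (intro nn_integral_cong) (simp add: space_mu)
  moreover have "(\<integral>\<^sup>+x. phi x * (\<integral>\<^sup>+w. f w \<partial>Q x) \<partial>M) = (\<integral>\<^sup>+x. phi x * (\<integral>\<^sup>+w. g w \<partial>Q x) \<partial>M)"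
    apply (intro nn_integral_cong)
    apply (subst nn_integral_cong[where v=g])
    using cong by (auto simp: space_M sets_eq_imp_space_eq[OF sets_Q])
  ultimately show ?case using cong by simp
next
  case (set A)
  have "(\<integral>\<^sup>+x. phi x * (\<integral>\<^sup>+w. indicator A w \<partial>Q x) \<partial>M) = (\<integral>\<^sup>+x. phi x * emeasure (Q x) A \<partial>M)"
    using set by (intro nn_integral_cong) (auto simp: space_M sets_Q)
  then show ?case using joint1[OF set] by simp
next
  case (mult u c)
  note [measurable] = mult.hyps(2)
  have "(\<integral>\<^sup>+w. c * u w * (\<integral>\<^sup>+x. phi x \<partial>P w) \<partial>mu) = (\<integral>\<^sup>+w. c * (u w * (\<integral>\<^sup>+x. phi x \<partial>P w)) \<partial>mu)"
    by (simp add: mult.assoc)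
  also have "\<dots> = c * (\<integral>\<^sup>+w. u w * (\<integral>\<^sup>+x. phi x \<partial>P w) \<partial>mu)"
    by (rule nn_integral_cmult) measurable
  also have "\<dots> = c * (\<integral>\<^sup>+x. phi x * (\<integral>\<^sup>+w. u w \<partial>Q x) \<partial>M)" using mult by simp
  also have "\<dots> = (\<integral>\<^sup>+x. c * (phi x * (\<integral>\<^sup>+w. u w \<partial>Q x)) \<partial>M)"
    by (rule nn_integral_cmult[symmetric]) measurable
  also have "\<dots> = (\<integral>\<^sup>+x. phi x * (\<integral>\<^sup>+w. c * u w \<partial>Q x) \<partial>M)"
    by (intro nn_integral_cong)
      (auto simp: space_M nn_integral_cmult measurable_cong_sets[OF sets_Q refl] mult.left_commute)
  finally show ?case .
next
  case (add u v)
  note [measurable] = \<open>u \<in> borel_measurable Om\<close> \<open>v \<in> borel_measurable Om\<close>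
  have "(\<integral>\<^sup>+w. (v w + u w) * (\<integral>\<^sup>+x. phi x \<partial>P w) \<partial>mu) = (\<integral>\<^sup>+w. v w * (\<integral>\<^sup>+x. phi x \<partial>P w) + u w * (\<integral>\<^sup>+x. phi x \<partial>P w) \<partial>mu)"
    by (simp add: distrib_right)
  also have "\<dots> = (\<integral>\<^sup>+w. v w * (\<integral>\<^sup>+x. phi x \<partial>P w) \<partial>mu) + (\<integral>\<^sup>+w. u w * (\<integral>\<^sup>+x. phi x \<partial>P w) \<partial>mu)"
    by (rule nn_integral_add) measurable
  also have "\<dots> = (\<integral>\<^sup>+x. phi x * (\<integral>\<^sup>+w. v w \<partial>Q x) \<partial>M) + (\<integral>\<^sup>+x. phi x * (\<integral>\<^sup>+w. u w \<partial>Q x) \<partial>M)" using add by simp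
  also have "\<dots> = (\<integral>\<^sup>+x. phi x * (\<integral>\<^sup>+w. v w \<partial>Q x) + phi x * (\<integral>\<^sup>+w. u w \<partial>Q x) \<partial>M)"
    by (rule nn_integral_add[symmetric]) measurable
  also have "\<dots> = (\<integral>\<^sup>+x. phi x * (\<integral>\<^sup>+w. v w + u w \<partial>Q x) \<partial>M)"
    by (intro nn_integral_cong)
      (auto simp: space_M nn_integral_add measurable_cong_sets[OF sets_Q refl] distrib_left)
  finally show ?case .
next
  case (seq U)
  note [measurable] = seq.hyps(1)
  have "(\<integral>\<^sup>+w. (SUP i. U i) w * (\<integral>\<^sup>+x. phi x \<partial>P w) \<partial>mu) = (\<integral>\<^sup>+w. (SUP i. U i w * (\<integral>\<^sup>+x. phi x \<partial>P w)) \<partial>mu)"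
    by (simp add: SUP_mult_right_ennreal image_comp)
  also have "\<dots> = (SUP i. (\<integral>\<^sup>+w. U i w * (\<integral>\<^sup>+x. phi x \<partial>P w) \<partial>mu))"
    using seq apply (intro nn_integral_monotone_convergence_SUP)
     apply (auto intro!: mult_right_mono simp: incseq_def le_fun_def)
    done
  also have "\<dots> = (SUP i. (\<integral>\<^sup>+x. phi x * (\<integral>\<^sup>+w. U i w \<partial>Q x) \<partial>M))" using seq by simp
  also have "\<dots> = (\<integral>\<^sup>+x. (SUP i. phi x * (\<integral>\<^sup>+w. U i w \<partial>Q x)) \<partial>M)"
    using seq apply (intro nn_integral_monotone_convergence_SUP[symmetric])
     apply (auto intro!: mult_left_mono nn_integral_mono simp: incseq_def le_fun_def)
    done
  also have "\<dots> = (\<integral>\<^sup>+x. phi x * (\<integral>\<^sup>+w. (SUP i. U i) w \<partial>Q x) \<partial>M)"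
  proof (intro nn_integral_cong)
    fix x assume x: "x \<in> space M"
    have "(\<integral>\<^sup>+w. (SUP i. U i) w \<partial>Q x) = (\<integral>\<^sup>+w. (SUP i. U i w) \<partial>Q x)"
      by (simp add: image_comp)
    also have "\<dots> = (SUP i. (\<integral>\<^sup>+w. U i w \<partial>Q x))"
      using seq x by (intro nn_integral_monotone_convergence_SUP)
        (auto simp: space_M measurable_cong_sets[OF sets_Q refl])
    finally show "(SUP i. phi x * (\<integral>\<^sup>+w. U i w \<partial>Q x)) = phi x * (\<integral>\<^sup>+w. (SUP i. U i) w \<partial>Q x)"
      by (simp add: SUP_mult_left_ennreal)
  qed
  finally show ?case .
qed

definition R :: "'a \<Rightarrow> 'a measure" where "R w = P w \<bind> Q"

lemma R_k: "R \<in> Om \<rightarrow>\<^sub>M prob_algebra Om"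
  unfolding R_def[abs_def] by (rule measurable_bind_prob_space[OF P_k Q_k])
lemma R_sub[measurable]: "R \<in> Om \<rightarrow>\<^sub>M subprob_algebra Om"
  using R_k by (rule measurable_prob_algebraD)
lemma sets_R: "w \<in> space Om \<Longrightarrow> sets (R w) = sets Om"
  using measurable_space[OF R_k] by (auto simp: space_prob_algebra)
lemma prob_R: "w \<in> space Om \<Longrightarrow> prob_space (R w)"
  using measurable_space[OF R_k] by (auto simp: space_prob_algebra)

definition RI :: "('a \<Rightarrow> ennreal) \<Rightarrow> 'a \<Rightarrow> ennreal" where
  "RI f w = (if w \<in> space Om then \<integral>\<^sup>+y. f y \<partial>R w else 0)"

lemma RI_meas[measurable]:
  assumes [measurable]: "f \<in> borel_measurable Om" shows "RI f \<in> borel_measurable Om"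
  unfolding RI_def[abs_def] by measurable

lemma RI_bind: "w \<in> space Om \<Longrightarrow> f \<in> borel_measurable Om \<Longrightarrow> RI f w = (\<integral>\<^sup>+x. (\<integral>\<^sup>+y. f y \<partial>Q x) \<partial>P w)"
  unfolding RI_def R_def
  by (simp add: nn_integral_bind[where B=Om] measurable_cong_sets[OF sets_P refl])

lemma RI_le1: "f \<in> borel_measurable Om \<Longrightarrow> (\<And>y. f y \<le> 1) \<Longrightarrow> RI f w \<le> 1"
proof (cases "w \<in> space Om")
  case True
  assume f: "f \<in> borel_measurable Om" and b: "\<And>y. f y \<le> 1"
  interpret prob_space "R w" using prob_R[OF True] .
  have "(\<integral>\<^sup>+y. f y \<partial>R w) \<le> (\<integral>\<^sup>+y. 1 \<partial>R w)" by (intro nn_integral_mono b)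
  then show ?thesis using True by (simp add: RI_def emeasure_space_1)
qed (simp add: RI_def)

lemma RI_mono: "(\<And>y. f y \<le> g y) \<Longrightarrow> RI f w \<le> RI g w"
  unfolding RI_def by (auto intro!: nn_integral_mono)

lemma RI_compl:
  assumes f[measurable]: "f \<in> borel_measurable Om" and b: "\<And>y. f y \<le> 1" and w: "w \<in> space Om"
  shows "RI (\<lambda>y. 1 - f y) w = 1 - RI f w"
proof -
  interpret prob_space "R w" using prob_R[OF w] .
  have "(\<integral>\<^sup>+y. 1 - f y \<partial>R w) = (\<integral>\<^sup>+y. 1 \<partial>R w) - (\<integral>\<^sup>+y. f y \<partial>R w)"
  proof (rule nn_integral_diff)
    have "(\<integral>\<^sup>+y. f y \<partial>R w) \<le> (\<integral>\<^sup>+y. 1 \<partial>R w)" by (intro nn_integral_mono b)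
    then show "(\<integral>\<^sup>+y. f y \<partial>R w) \<noteq> \<infinity>" by (auto simp: emeasure_space_1 top_unique)
  qed (auto simp: b measurable_cong_sets[OF sets_R[OF w] refl])
  then show ?thesis using w by (simp add: RI_def emeasure_space_1)
qed

lemma key:
  assumes u[measurable]: "u \<in> borel_measurable Om" and v[measurable]: "v \<in> borel_measurable Om"
  shows "(\<integral>\<^sup>+w. u w * RI v w \<partial>mu) = (\<integral>\<^sup>+x. (\<integral>\<^sup>+y. v y \<partial>Q x) * (\<integral>\<^sup>+y. u y \<partial>Q x) \<partial>M)"
proof -
  have "(\<integral>\<^sup>+w. u w * RI v w \<partial>mu) = (\<integral>\<^sup>+w. u w * (\<integral>\<^sup>+x. (\<integral>\<^sup>+y. v y \<partial>Q x) \<partial>P w) \<partial>mu)"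
    by (intro nn_integral_cong) (simp add: RI_bind space_mu)
  also have "\<dots> = (\<integral>\<^sup>+x. (\<integral>\<^sup>+y. v y \<partial>Q x) * (\<integral>\<^sup>+y. u y \<partial>Q x) \<partial>M)"
    by (rule joint2) measurable
  finally show ?thesis .
qed

lemma int_mu:
  assumes u[measurable]: "u \<in> borel_measurable Om"
  shows "(\<integral>\<^sup>+w. u w \<partial>mu) = (\<integral>\<^sup>+x. (\<integral>\<^sup>+y. u y \<partial>Q x) \<partial>M)"
proof -
  have "(\<integral>\<^sup>+w. u w \<partial>mu) = (\<integral>\<^sup>+w. u w * (\<integral>\<^sup>+x. 1 \<partial>P w) \<partial>mu)"
    by (intro nn_integral_cong) (simp add: space_mu prob_space.emeasure_space_1[OF prob_P])
  also have "\<dots> = (\<integral>\<^sup>+x. 1 * (\<integral>\<^sup>+y. u y \<partial>Q x) \<partial>M)"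
    by (rule joint2) measurable
  finally show ?thesis by simp
qed

lemma inv_mu:
  assumes v[measurable]: "v \<in> borel_measurable Om"
  shows "(\<integral>\<^sup>+w. RI v w \<partial>mu) = (\<integral>\<^sup>+w. v w \<partial>mu)"
proof -
  have "(\<integral>\<^sup>+w. RI v w \<partial>mu) = (\<integral>\<^sup>+w. 1 * RI v w \<partial>mu)" by simp
  also have "\<dots> = (\<integral>\<^sup>+x. (\<integral>\<^sup>+y. v y \<partial>Q x) * (\<integral>\<^sup>+y. 1 \<partial>Q x) \<partial>M)"
    by (rule key) measurable
  also have "\<dots> = (\<integral>\<^sup>+x. (\<integral>\<^sup>+y. v y \<partial>Q x) \<partial>M)"
    by (intro nn_integral_cong) (simp add: space_M prob_space.emeasure_space_1[OF prob_Q])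
  also have "\<dots> = (\<integral>\<^sup>+w. v w \<partial>mu)" by (rule int_mu[symmetric]) measurable
  finally show ?thesis .
qed

primrec fs :: "'a set \<Rightarrow> nat \<Rightarrow> 'a \<Rightarrow> ennreal" where
  "fs C 0 = indicator C"
| "fs C (Suc n) = (\<lambda>w. indicator C w + indicator (- C) w * RI (fs C n) w)"

lemma fs_meas[measurable]: "C \<in> sets Om \<Longrightarrow> fs C n \<in> borel_measurable Om"
  by (induction n) simp_all

lemma fs_inC: "w \<in> C \<Longrightarrow> fs C n w = 1"
  by (cases n) auto

lemma fs_notC: "w \<notin> C \<Longrightarrow> fs C (Suc n) w = RI (fs C n) w"
  by simp

lemma fs_le1: "C \<in> sets Om \<Longrightarrow> fs C n w \<le> 1"
proof (induction n arbitrary: w)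
  case 0 then show ?case by (simp add: indicator_def)
next
  case (Suc n) then show ?case
    by (cases "w \<in> C") (auto intro: RI_le1)
qed

lemma fs_mono: "C \<in> sets Om \<Longrightarrow> fs C n w \<le> fs C (Suc n) w"
proof (induction n arbitrary: w)
  case 0 then show ?case by (cases "w \<in> C") auto
next
  case (Suc n) then show ?case
    by (cases "w \<in> C") (auto simp del: fs.simps simp: fs_inC fs_notC intro: RI_mono)
qed

lemma fs_incseq: "C \<in> sets Om \<Longrightarrow> incseq (\<lambda>n. fs C n w)"
  by (rule incseq_SucI) (rule fs_mono)

lemma fs_int:
  assumes C[measurable]: "C \<in> sets Om"
  shows "(\<integral>\<^sup>+w. fs C n w \<partial>mu) \<le> of_nat (Suc n) * emeasure mu C"
proof (induction n)
  case 0 then show ?case using C by (simp add: mu_sets)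
next
  case (Suc n)
  have "(\<integral>\<^sup>+w. fs C (Suc n) w \<partial>mu) \<le> (\<integral>\<^sup>+w. indicator C w + RI (fs C n) w \<partial>mu)"
    by (intro nn_integral_mono) (auto simp: indicator_def)
  also have "\<dots> = emeasure mu C + (\<integral>\<^sup>+w. RI (fs C n) w \<partial>mu)"
    using C by (subst nn_integral_add) (auto simp: mu_sets)
  also have "\<dots> = emeasure mu C + (\<integral>\<^sup>+w. fs C n w \<partial>mu)"
    by (simp add: inv_mu)
  also have "\<dots> \<le> emeasure mu C + of_nat (Suc n) * emeasure mu C"
    using Suc by (rule add_left_mono)
  also have "\<dots> = of_nat (Suc (Suc n)) * emeasure mu C"
    by (simp add: distrib_right)
  finally show ?case .
qed

lemma vr_meas[measurable]:
  assumes [measurable]: "f \<in> borel_measurable Om"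
  shows "(\<lambda>x. ennreal (vr (Q x) f)) \<in> borel_measurable M"
  unfolding vr_def by measurable

lemma energy_fs:
  assumes C[measurable]: "C \<in> sets Om" and fin: "emeasure mu C < \<infinity>"
  shows "(\<integral>\<^sup>+x. ennreal (vr (Q x) (fs C n)) \<partial>M) \<le> (\<integral>\<^sup>+w. indicator C w * (1 - RI (fs C n) w) \<partial>mu)"
proof -
  define f where "f = fs C n"
  have f[measurable]: "f \<in> borel_measurable Om" unfolding f_def by simp
  have fb: "f w \<le> 1" for w unfolding f_def by (rule fs_le1[OF C])
  have rb: "RI f w \<le> 1" for w by (rule RI_le1[OF f fb])
  have pw: "f w * f w \<le> indicator C w * (1 - RI f w) + f w * RI f w" for w
  proof (cases "w \<in> C")
    case True
    then show ?thesis using rb[of w] by (simp add: f_def fs_inC diff_add_cancel_ennreal)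
  next
    case False
    show ?thesis
    proof (cases n)
      case 0 then show ?thesis using False by (simp add: f_def)
    next
      case (Suc k)
      have "f w = RI (fs C k) w" using False Suc by (simp add: f_def del: fs.simps add: fs_notC)
      also have "\<dots> \<le> RI f w" unfolding f_def Suc by (intro RI_mono fs_mono[OF C])
      finally have "f w * f w \<le> f w * RI f w" by (intro mult_left_mono) auto
      then show ?thesis using False by simp
    qed
  qed
  have A: "(\<integral>\<^sup>+w. f w * f w \<partial>mu) = (\<integral>\<^sup>+w. f w * RI f w \<partial>mu) + (\<integral>\<^sup>+x. ennreal (vr (Q x) f) \<partial>M)"
  proof -
    have "(\<integral>\<^sup>+w. f w * f w \<partial>mu) = (\<integral>\<^sup>+x. (\<integral>\<^sup>+y. f y * f y \<partial>Q x) \<partial>M)"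
      by (rule int_mu) measurable
    also have "\<dots> = (\<integral>\<^sup>+x. (\<integral>\<^sup>+y. f y \<partial>Q x) * (\<integral>\<^sup>+y. f y \<partial>Q x) + ennreal (vr (Q x) f) \<partial>M)"
      by (intro nn_integral_cong vr_props(2)[OF prob_Q _ fb])
         (auto simp: space_M measurable_cong_sets[OF sets_Q refl])
    also have "\<dots> = (\<integral>\<^sup>+x. (\<integral>\<^sup>+y. f y \<partial>Q x) * (\<integral>\<^sup>+y. f y \<partial>Q x) \<partial>M) + (\<integral>\<^sup>+x. ennreal (vr (Q x) f) \<partial>M)"
      by (rule nn_integral_add) measurable
    also have "(\<integral>\<^sup>+x. (\<integral>\<^sup>+y. f y \<partial>Q x) * (\<integral>\<^sup>+y. f y \<partial>Q x) \<partial>M) = (\<integral>\<^sup>+w. f w * RI f w \<partial>mu)"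
      by (rule key[symmetric]) measurable
    finally show ?thesis .
  qed
  have B: "(\<integral>\<^sup>+w. f w * f w \<partial>mu) \<le> (\<integral>\<^sup>+w. indicator C w * (1 - RI f w) \<partial>mu) + (\<integral>\<^sup>+w. f w * RI f w \<partial>mu)"
  proof -
    have "(\<integral>\<^sup>+w. f w * f w \<partial>mu) \<le> (\<integral>\<^sup>+w. indicator C w * (1 - RI f w) + f w * RI f w \<partial>mu)"
      by (intro nn_integral_mono pw)
    also have "\<dots> = (\<integral>\<^sup>+w. indicator C w * (1 - RI f w) \<partial>mu) + (\<integral>\<^sup>+w. f w * RI f w \<partial>mu)"
      by (rule nn_integral_add) measurable
    finally show ?thesis .
  qed
  have Cfin: "(\<integral>\<^sup>+w. f w * RI f w \<partial>mu) \<noteq> \<infinity>"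
  proof -
    have "(\<integral>\<^sup>+w. f w * RI f w \<partial>mu) \<le> (\<integral>\<^sup>+w. f w \<partial>mu)"
      by (intro nn_integral_mono) (metis mult.right_neutral mult_left_mono rb zero_le)
    also have "\<dots> \<le> of_nat (Suc n) * emeasure mu C" unfolding f_def by (rule fs_int[OF C])
    also have "\<dots> < \<infinity>" using fin by (simp add: ennreal_mult_less_top of_nat_less_top)
    finally show ?thesis by simp
  qed
  from A B have "(\<integral>\<^sup>+w. f w * RI f w \<partial>mu) + (\<integral>\<^sup>+x. ennreal (vr (Q x) f) \<partial>M)
     \<le> (\<integral>\<^sup>+w. f w * RI f w \<partial>mu) + (\<integral>\<^sup>+w. indicator C w * (1 - RI f w) \<partial>mu)"
    by (simp add: add.commute)
  then show ?thesis using Cfin unfolding f_def by (simp add: ennreal_add_left_cancel_le)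
qed

definition fsup :: "'a set \<Rightarrow> 'a \<Rightarrow> ennreal" where
  "fsup C w = (SUP n. fs C n w)"

lemma fsup_meas[measurable]: "C \<in> sets Om \<Longrightarrow> fsup C \<in> borel_measurable Om"
  unfolding fsup_def[abs_def] by measurable

lemma fsup_le1: "C \<in> sets Om \<Longrightarrow> fsup C w \<le> 1"
  unfolding fsup_def by (auto intro!: SUP_least fs_le1)

lemma fsup_inC: "w \<in> C \<Longrightarrow> fsup C w = 1"
  unfolding fsup_def by (simp add: fs_inC)

lemma RI_fsup:
  assumes C[measurable]: "C \<in> sets Om"
  shows "RI (fsup C) w = (SUP n. RI (fs C n) w)"
proof (cases "w \<in> space Om")
  case True
  have "(\<integral>\<^sup>+y. fsup C y \<partial>R w) = (SUP n. (\<integral>\<^sup>+y. fs C n y \<partial>R w))"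
    unfolding fsup_def
    by (rule nn_integral_monotone_convergence_SUP_AE)
       (simp_all del: fs.simps add: fs_mono[OF C] measurable_cong_sets[OF sets_R[OF True] refl])
  then show ?thesis using True by (simp add: RI_def)
qed (simp add: RI_def)

lemma fsup_eq:
  assumes C[measurable]: "C \<in> sets Om"
  shows "fsup C w = indicator C w + indicator (- C) w * RI (fsup C) w"
proof (cases "w \<in> C")
  case True then show ?thesis by (simp add: fsup_inC)
next
  case False
  have "fsup C w = (SUP n. fs C (Suc n) w)"
    unfolding fsup_def
  proof (rule antisym)
    show "(SUP n. fs C n w) \<le> (SUP n. fs C (Suc n) w)"
      by (rule SUP_mono) (use fs_mono[OF C] in blast)
    show "(SUP n. fs C (Suc n) w) \<le> (SUP n. fs C n w)"
      by (rule SUP_mono) blast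
  qed
  also have "\<dots> = (SUP n. RI (fs C n) w)" using False by simp
  also have "\<dots> = RI (fsup C) w" by (rule RI_fsup[symmetric, OF C])
  finally show ?thesis using False by simp
qed

lemma energy_fsup:
  assumes C[measurable]: "C \<in> sets Om" and fin: "emeasure mu C < \<infinity>"
  shows "(\<integral>\<^sup>+x. ennreal (vr (Q x) (fsup C)) \<partial>M) \<le> emeasure mu C"
proof -
  have conv: "(\<lambda>n. ennreal (vr (Q x) (fs C n))) \<longlonglongrightarrow> ennreal (vr (Q x) (fsup C))" if x: "x \<in> space M" for x
  proof -
    have x': "x \<in> space X" using x space_M by simp
    note sQ = measurable_cong_sets[OF sets_Q[OF x'] refl]
    have mono2: "fs C n y * fs C n y \<le> fs C (Suc n) y * fs C (Suc n) y" for n y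
      using fs_mono[OF C, of n y] by (intro mult_mono) simp_all
    have m1: "(\<lambda>n. \<integral>\<^sup>+y. fs C n y \<partial>Q x) \<longlonglongrightarrow> (\<integral>\<^sup>+y. fsup C y \<partial>Q x)"
    proof -
      have "(\<integral>\<^sup>+y. fsup C y \<partial>Q x) = (SUP n. (\<integral>\<^sup>+y. fs C n y \<partial>Q x))"
        unfolding fsup_def
        by (rule nn_integral_monotone_convergence_SUP_AE) (simp_all del: fs.simps add: fs_mono[OF C] sQ)
      moreover have "incseq (\<lambda>n. \<integral>\<^sup>+y. fs C n y \<partial>Q x)"
        by (rule incseq_SucI) (intro nn_integral_mono fs_mono[OF C])
      ultimately show ?thesis by (simp add: LIMSEQ_SUP)
    qed
    have m2: "(\<lambda>n. \<integral>\<^sup>+y. fs C n y * fs C n y \<partial>Q x) \<longlonglongrightarrow> (\<integral>\<^sup>+y. fsup C y * fsup C y \<partial>Q x)"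
    proof -
      have sq: "fsup C y * fsup C y = (SUP n. fs C n y * fs C n y)" for y
      proof -
        have inc: "incseq (\<lambda>n. fs C n y * fs C n y)"
          by (rule incseq_SucI) (rule mono2)
        have ne: "(SUP n. fs C n y) \<noteq> \<infinity>"
        proof
          assume "(SUP n. fs C n y) = \<infinity>"
          then have "fsup C y = \<infinity>" by (simp add: fsup_def)
          then show False using fsup_le1[OF C, of y] by (simp add: top_unique)
        qed
        have "(\<lambda>n. fs C n y * fs C n y) \<longlonglongrightarrow> fsup C y * fsup C y"
          unfolding fsup_def
          by (intro tendsto_mult_ennreal LIMSEQ_SUP incseq_SucI fs_mono[OF C]) (use ne in auto)
        then show ?thesis using LIMSEQ_SUP[OF inc] LIMSEQ_unique by blast
      qed
      have "(\<integral>\<^sup>+y. fsup C y * fsup C y \<partial>Q x) = (SUP n. (\<integral>\<^sup>+y. fs C n y * fs C n y \<partial>Q x))"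
        unfolding sq
        by (rule nn_integral_monotone_convergence_SUP_AE) (simp_all del: fs.simps add: mono2 sQ)
      moreover have "incseq (\<lambda>n. \<integral>\<^sup>+y. fs C n y * fs C n y \<partial>Q x)"
        by (rule incseq_SucI) (intro nn_integral_mono mono2)
      ultimately show ?thesis by (simp add: LIMSEQ_SUP)
    qed
    interpret prob_space "Q x" using prob_Q[OF x'] .
    have b1: "(\<integral>\<^sup>+y. fsup C y \<partial>Q x) \<le> 1"
      using nn_integral_mono[of "Q x" "fsup C" "\<lambda>_. 1"] fsup_le1[OF C] by (simp add: emeasure_space_1)
    have b2: "(\<integral>\<^sup>+y. fsup C y * fsup C y \<partial>Q x) \<le> 1"
      using nn_integral_mono[of "Q x" "\<lambda>y. fsup C y * fsup C y" "\<lambda>_. 1"] fsup_le1[OF C]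
      by (simp add: emeasure_space_1 mult_le_one)
    have e1: "(\<integral>\<^sup>+y. fsup C y \<partial>Q x) = ennreal (enn2real (\<integral>\<^sup>+y. fsup C y \<partial>Q x))"
      using b1 by (metis ennreal_enn2real ennreal_one_less_top le_less_trans less_top)
    have e2: "(\<integral>\<^sup>+y. fsup C y * fsup C y \<partial>Q x) = ennreal (enn2real (\<integral>\<^sup>+y. fsup C y * fsup C y \<partial>Q x))"
      using b2 by (metis ennreal_enn2real ennreal_one_less_top le_less_trans less_top)
    define a1 where "a1 = enn2real (\<integral>\<^sup>+y. fsup C y \<partial>Q x)"
    define a2 where "a2 = enn2real (\<integral>\<^sup>+y. fsup C y * fsup C y \<partial>Q x)"
    have e1': "(\<integral>\<^sup>+y. fsup C y \<partial>Q x) = ennreal a1" using e1 unfolding a1_def by simp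
    have e2': "(\<integral>\<^sup>+y. fsup C y * fsup C y \<partial>Q x) = ennreal a2" using e2 unfolding a2_def by simp
    have t1: "(\<lambda>n. enn2real (\<integral>\<^sup>+y. fs C n y \<partial>Q x)) \<longlonglongrightarrow> a1"
      by (rule tendsto_enn2real) (use m1[unfolded e1'] in \<open>simp_all add: a1_def\<close>)
    have t2: "(\<lambda>n. enn2real (\<integral>\<^sup>+y. fs C n y * fs C n y \<partial>Q x)) \<longlonglongrightarrow> a2"
      by (rule tendsto_enn2real) (use m2[unfolded e2'] in \<open>simp_all add: a2_def\<close>)
    have "(\<lambda>n. vr (Q x) (fs C n)) \<longlonglongrightarrow> a2 - a1^2"
      unfolding vr_def by (intro tendsto_diff tendsto_power t1 t2)
    moreover have "vr (Q x) (fsup C) = a2 - a1^2" unfolding vr_def a1_def a2_def ..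
    ultimately have "(\<lambda>n. vr (Q x) (fs C n)) \<longlonglongrightarrow> vr (Q x) (fsup C)" by simp
    then show ?thesis by (rule tendsto_ennrealI)
  qed
  have "(\<integral>\<^sup>+x. ennreal (vr (Q x) (fsup C)) \<partial>M) = (\<integral>\<^sup>+x. liminf (\<lambda>n. ennreal (vr (Q x) (fs C n))) \<partial>M)"
    by (intro nn_integral_cong) (rule lim_imp_Liminf[symmetric], simp, rule conv)
  also have "\<dots> \<le> liminf (\<lambda>n. \<integral>\<^sup>+x. ennreal (vr (Q x) (fs C n)) \<partial>M)"
    by (rule nn_integral_liminf) measurable
  also have "\<dots> \<le> emeasure mu C"
  proof (rule Liminf_le)
    show "\<forall>\<^sub>F n in sequentially. (\<integral>\<^sup>+x. ennreal (vr (Q x) (fs C n)) \<partial>M) \<le> emeasure mu C"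
    proof (intro always_eventually allI)
      fix n
      have "(\<integral>\<^sup>+x. ennreal (vr (Q x) (fs C n)) \<partial>M) \<le> (\<integral>\<^sup>+w. indicator C w * (1 - RI (fs C n) w) \<partial>mu)"
        by (rule energy_fs[OF C fin])
      also have "\<dots> \<le> (\<integral>\<^sup>+w. indicator C w \<partial>mu)"
        by (intro nn_integral_mono) (simp add: indicator_def)
      finally show "(\<integral>\<^sup>+x. ennreal (vr (Q x) (fs C n)) \<partial>M) \<le> emeasure mu C"
        using C by (simp add: mu_sets)
    qed
  qed simp
  finally show ?thesis .
qed

lemma escape_bound:
  assumes C[measurable]: "C \<in> sets Om" and fin: "emeasure mu C < \<infinity>"
    and h[measurable]: "h \<in> borel_measurable Om" and hb: "\<And>w. h w \<le> 1"
    and hint: "(\<integral>\<^sup>+w. h w \<partial>mu) < \<infinity>" and lam: "lam > 0"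
  shows "(\<integral>\<^sup>+w. h w * (indicator C w * (1 - RI (fsup C) w)) \<partial>mu)
     \<le> ennreal (lam / 2) * (\<integral>\<^sup>+x. ennreal (vr (Q x) h) \<partial>M) + ennreal (1 / (2 * lam)) * emeasure mu C"
proof -
  define f where "f = fsup C"
  have f[measurable]: "f \<in> borel_measurable Om" unfolding f_def by simp
  have fb: "f w \<le> 1" for w unfolding f_def by (rule fsup_le1[OF C])
  have rb: "RI f w \<le> 1" for w by (rule RI_le1[OF f fb])
  have pw: "h w * f w = h w * (indicator C w * (1 - RI f w)) + h w * RI f w" for w
  proof (cases "w \<in> C")
    case True
    then have "f w = 1" by (simp add: f_def fsup_inC)
    then show ?thesis using True rb[of w]
      by (simp add: distrib_left[symmetric] diff_add_cancel_ennreal)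
  next
    case False
    then have "f w = RI f w" using fsup_eq[OF C, of w] by (simp add: f_def)
    then show ?thesis using False by simp
  qed
  define rest where "rest = ennreal (lam / 2) * (\<integral>\<^sup>+x. ennreal (vr (Q x) h) \<partial>M) + ennreal (1 / (2 * lam)) * emeasure mu C"
  have "(\<integral>\<^sup>+w. h w * f w \<partial>mu) = (\<integral>\<^sup>+x. (\<integral>\<^sup>+y. h y * f y \<partial>Q x) \<partial>M)"
    by (rule int_mu) measurable
  also have "\<dots> \<le> (\<integral>\<^sup>+x. (\<integral>\<^sup>+y. h y \<partial>Q x) * (\<integral>\<^sup>+y. f y \<partial>Q x)
        + ennreal (lam / 2) * ennreal (vr (Q x) h) + ennreal (1 / (2 * lam)) * ennreal (vr (Q x) f) \<partial>M)"
  proof (intro nn_integral_mono)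
    fix x assume x: "x \<in> space M"
    then have x': "x \<in> space X" by (simp add: space_M)
    note sQ = measurable_cong_sets[OF sets_Q[OF x'] refl]
    have v1: "vr (Q x) h \<ge> 0" by (rule vr_props(1)[OF prob_Q[OF x']]) (auto simp: sQ hb)
    have v2: "vr (Q x) f \<ge> 0" by (rule vr_props(1)[OF prob_Q[OF x']]) (auto simp: sQ fb)
    have "(\<integral>\<^sup>+y. h y * f y \<partial>Q x) \<le> (\<integral>\<^sup>+y. h y \<partial>Q x) * (\<integral>\<^sup>+y. f y \<partial>Q x)
        + ennreal (lam / 2 * vr (Q x) h) + ennreal (1 / (2 * lam) * vr (Q x) f)"
      by (rule cov_bound[OF prob_Q[OF x'] _ hb _ fb lam]) (auto simp: sQ)
    also have "\<dots> = (\<integral>\<^sup>+y. h y \<partial>Q x) * (\<integral>\<^sup>+y. f y \<partial>Q x)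
        + ennreal (lam / 2) * ennreal (vr (Q x) h) + ennreal (1 / (2 * lam)) * ennreal (vr (Q x) f)"
      using v1 v2 lam by (simp add: ennreal_mult[symmetric])
    finally show "(\<integral>\<^sup>+y. h y * f y \<partial>Q x) \<le> (\<integral>\<^sup>+y. h y \<partial>Q x) * (\<integral>\<^sup>+y. f y \<partial>Q x)
        + ennreal (lam / 2) * ennreal (vr (Q x) h) + ennreal (1 / (2 * lam)) * ennreal (vr (Q x) f)" .
  qed
  also have "\<dots> = (\<integral>\<^sup>+x. (\<integral>\<^sup>+y. h y \<partial>Q x) * (\<integral>\<^sup>+y. f y \<partial>Q x) \<partial>M)
        + ennreal (lam / 2) * (\<integral>\<^sup>+x. ennreal (vr (Q x) h) \<partial>M) + ennreal (1 / (2 * lam)) * (\<integral>\<^sup>+x. ennreal (vr (Q x) f) \<partial>M)"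
    by (simp add: nn_integral_add nn_integral_cmult)
  also have "\<dots> \<le> (\<integral>\<^sup>+x. (\<integral>\<^sup>+y. h y \<partial>Q x) * (\<integral>\<^sup>+y. f y \<partial>Q x) \<partial>M) + rest"
    unfolding rest_def f_def add.assoc
    by (intro add_left_mono add_mono order.refl mult_left_mono energy_fsup[OF C fin]) simp
  also have "(\<integral>\<^sup>+x. (\<integral>\<^sup>+y. h y \<partial>Q x) * (\<integral>\<^sup>+y. f y \<partial>Q x) \<partial>M) = (\<integral>\<^sup>+w. h w * RI f w \<partial>mu)"
    by (subst key) (auto simp: mult.commute intro!: nn_integral_cong)
  finally have I: "(\<integral>\<^sup>+w. h w * f w \<partial>mu) \<le> (\<integral>\<^sup>+w. h w * RI f w \<partial>mu) + rest" .
  have "(\<integral>\<^sup>+w. h w * f w \<partial>mu) = (\<integral>\<^sup>+w. h w * (indicator C w * (1 - RI f w)) \<partial>mu) + (\<integral>\<^sup>+w. h w * RI f w \<partial>mu)"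
    unfolding pw by (rule nn_integral_add) measurable
  with I have II: "(\<integral>\<^sup>+w. h w * RI f w \<partial>mu) + (\<integral>\<^sup>+w. h w * (indicator C w * (1 - RI f w)) \<partial>mu)
      \<le> (\<integral>\<^sup>+w. h w * RI f w \<partial>mu) + rest" by (simp add: add.commute)
  have fin2: "(\<integral>\<^sup>+w. h w * RI f w \<partial>mu) \<noteq> \<infinity>"
  proof -
    have "(\<integral>\<^sup>+w. h w * RI f w \<partial>mu) \<le> (\<integral>\<^sup>+w. h w \<partial>mu)"
      by (intro nn_integral_mono) (metis mult.right_neutral mult_left_mono rb zero_le)
    then show ?thesis using hint by (auto simp: top_unique)
  qed
  from II fin2 show ?thesis unfolding rest_def f_def by (simp add: ennreal_add_left_cancel_le)
qed

lemma rec_tendsto: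
  assumes C[measurable]: "C \<in> sets Om" and fin: "emeasure mu C < \<infinity>"
    and rec: "AE w in mu. w \<in> C \<longrightarrow> RI (fsup C) w = 1"
  shows "(\<lambda>n. \<integral>\<^sup>+w. indicator C w * (1 - RI (fs C n) w) \<partial>mu) \<longlonglongrightarrow> 0"
proof -
  have muC: "(\<integral>\<^sup>+w. indicator C w \<partial>mu) = emeasure mu C" using C by (simp add: mu_sets)
  have rb: "RI (fs C n) w \<le> 1" for n w by (rule RI_le1) (auto intro: fs_le1[OF C])
  have eq: "(\<integral>\<^sup>+w. indicator C w * (1 - RI (fs C n) w) \<partial>mu) = emeasure mu C - (\<integral>\<^sup>+w. indicator C w * RI (fs C n) w \<partial>mu)" for n
  proof -
    have "(\<integral>\<^sup>+w. indicator C w * (1 - RI (fs C n) w) \<partial>mu) = (\<integral>\<^sup>+w. indicator C w - indicator C w * RI (fs C n) w \<partial>mu)"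
      by (intro nn_integral_cong) (simp add: indicator_def)
    also have "\<dots> = (\<integral>\<^sup>+w. indicator C w \<partial>mu) - (\<integral>\<^sup>+w. indicator C w * RI (fs C n) w \<partial>mu)"
    proof (rule nn_integral_diff)
      have "(\<integral>\<^sup>+w. indicator C w * RI (fs C n) w \<partial>mu) \<le> (\<integral>\<^sup>+w. indicator C w \<partial>mu)"
        by (intro nn_integral_mono) (metis mult.right_neutral mult_left_mono rb zero_le)
      then show "(\<integral>\<^sup>+w. indicator C w * RI (fs C n) w \<partial>mu) \<noteq> \<infinity>" using fin muC by (auto simp: top_unique)
      show "AE x in mu. indicator C x * RI (fs C n) x \<le> indicator C x"
        by (intro AE_I2) (metis mult.right_neutral mult_left_mono rb zero_le)
    qed measurable
    finally show ?thesis unfolding muC .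
  qed
  have lim: "(\<lambda>n. \<integral>\<^sup>+w. indicator C w * RI (fs C n) w \<partial>mu) \<longlonglongrightarrow> emeasure mu C"
  proof -
    have "(\<integral>\<^sup>+w. (SUP n. indicator C w * RI (fs C n) w) \<partial>mu) = (SUP n. \<integral>\<^sup>+w. indicator C w * RI (fs C n) w \<partial>mu)"
      by (rule nn_integral_monotone_convergence_SUP_AE)
         (auto simp del: fs.simps intro!: AE_I2 mult_left_mono RI_mono fs_mono[OF C])
    moreover have "(\<integral>\<^sup>+w. (SUP n. indicator C w * RI (fs C n) w) \<partial>mu) = emeasure mu C"
    proof -
      have "(\<integral>\<^sup>+w. (SUP n. indicator C w * RI (fs C n) w) \<partial>mu) = (\<integral>\<^sup>+w. indicator C w * RI (fsup C) w \<partial>mu)"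
        by (intro nn_integral_cong) (simp add: RI_fsup[OF C] SUP_mult_left_ennreal)
      also have "\<dots> = (\<integral>\<^sup>+w. indicator C w \<partial>mu)"
        by (intro nn_integral_cong_AE) (use rec in \<open>auto simp: indicator_def\<close>)
      finally show ?thesis unfolding muC .
    qed
    moreover have "incseq (\<lambda>n. \<integral>\<^sup>+w. indicator C w * RI (fs C n) w \<partial>mu)"
      by (rule incseq_SucI) (intro nn_integral_mono mult_left_mono RI_mono fs_mono[OF C]; simp)
    ultimately show ?thesis by (metis LIMSEQ_SUP)
  qed
  have "(\<lambda>n. emeasure mu C - (\<integral>\<^sup>+w. indicator C w * RI (fs C n) w \<partial>mu)) \<longlonglongrightarrow> emeasure mu C - emeasure mu C"
    by (intro tendsto_diff_ennreal tendsto_const lim) (use fin in auto)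
  then show ?thesis unfolding eq using fin by simp
qed

definition T :: "'a set \<Rightarrow> ('a \<Rightarrow> ennreal) \<Rightarrow> 'a \<Rightarrow> ennreal" where
  "T C psi = RI (\<lambda>y. indicator (- C) y * psi y)"

lemma T_meas[measurable]:
  assumes [measurable]: "C \<in> sets Om" "psi \<in> borel_measurable Om"
  shows "T C psi \<in> borel_measurable Om"
  unfolding T_def by measurable

lemma Tpow_meas[measurable]:
  assumes [measurable]: "C \<in> sets Om" "psi \<in> borel_measurable Om"
  shows "(T C ^^ n) psi \<in> borel_measurable Om"
  by (induction n) simp_all

end

locale rchain_start = rchain +
  fixes w0 assumes w0: "w0 \<in> space Om"
begin

definition Kc :: "nat \<Rightarrow> (nat \<Rightarrow> 'a) \<Rightarrow> 'a measure" where
  "Kc = (\<lambda>i \<omega>. if i = 0 then return Om w0 else R (\<omega> (i - 1)))"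

lemma Kc_meas: "Kc i \<in> Pi\<^sub>M {0..<i} (\<lambda>_. Om) \<rightarrow>\<^sub>M subprob_algebra Om"
proof (cases i)
  case 0
  have "return Om w0 \<in> space (subprob_algebra Om)"
    using w0 by (simp add: space_subprob_algebra subprob_space_return)
  then show ?thesis using 0 by (simp add: Kc_def)
next
  case (Suc j)
  have "(\<lambda>\<omega>. \<omega> j) \<in> Pi\<^sub>M {0..<i} (\<lambda>_. Om) \<rightarrow>\<^sub>M Om"
    by (rule measurable_component_singleton) (simp add: Suc)
  from measurable_compose[OF this R_sub]
  have "(\<lambda>\<omega>. R (\<omega> j)) \<in> Pi\<^sub>M {0..<i} (\<lambda>_. Om) \<rightarrow>\<^sub>M subprob_algebra Om" .
  then show ?thesis using Suc by (simp add: Kc_def)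
qed

lemma Kc_prob: "x \<in> space (Pi\<^sub>M {0..<i} (\<lambda>_. Om)) \<Longrightarrow> prob_space (Kc i x)"
proof (cases i)
  case 0 then show ?thesis using w0 by (simp add: Kc_def prob_space_return)
next
  case (Suc j)
  assume x: "x \<in> space (Pi\<^sub>M {0..<i} (\<lambda>_. Om))"
  have "x j \<in> space Om" using x Suc by (auto simp: space_PiM)
  then show ?thesis using Suc by (simp add: Kc_def prob_R)
qed

lemma Kc_IT: "Ionescu_Tulcea Kc (\<lambda>_. Om)"
  unfolding Ionescu_Tulcea_def using Kc_meas Kc_prob by blast

sublocale IT: Ionescu_Tulcea Kc "\<lambda>_. Om" by (rule Kc_IT)

lemma chain_law_eq: "chain_law Om R w0 = IT.PF.lim"
  unfolding chain_law_def Kc_def ..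

lemma avoid_pred:
  assumes C[measurable]: "C \<in> sets Om" and mn: "m < (n::nat)"
  shows "Measurable.pred (PiM {0..<n} (\<lambda>_. Om)) (\<lambda>\<omega>. \<forall>k\<in>{1..m}. \<omega> k \<notin> C)"
proof (rule pred_intros_finite(3))
  fix i assume i: "i \<in> {1..m}"
  have [measurable]: "(\<lambda>\<omega>. \<omega> i) \<in> PiM {0..<n} (\<lambda>_. Om) \<rightarrow>\<^sub>M Om"
    by (rule measurable_component_singleton) (use i mn in auto)
  show "Measurable.pred (PiM {0..<n} (\<lambda>_. Om)) (\<lambda>\<omega>. \<omega> i \<notin> C)" by measurable
qed simp

lemma F_meas:
  fixes psi :: "'a \<Rightarrow> ennreal"
  assumes C[measurable]: "C \<in> sets Om" and psi[measurable]: "psi \<in> borel_measurable Om"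
  shows "(\<lambda>\<omega>. indicator {\<omega>. \<forall>k\<in>{1..m::nat}. \<omega> k \<notin> C} \<omega> * psi (\<omega> m)) \<in> borel_measurable (PiM {0..<Suc m} (\<lambda>_. Om))"
proof -
  have cm: "(\<lambda>\<omega>. \<omega> m) \<in> PiM {0..<Suc m} (\<lambda>_. Om) \<rightarrow>\<^sub>M Om"
    by (rule measurable_component_singleton) auto
  have p: "Measurable.pred (PiM {0..<Suc m} (\<lambda>_. Om)) (\<lambda>\<omega>. \<forall>k\<in>{1..m}. \<omega> k \<notin> C)"
    by (rule avoid_pred) auto
  have [measurable]: "(\<lambda>\<omega>. indicator {\<omega>. \<forall>k\<in>{1..m::nat}. \<omega> k \<notin> C} \<omega> :: ennreal) \<in> borel_measurable (PiM {0..<Suc m} (\<lambda>_. Om))"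
    by (rule borel_measurable_indicator') (use p in \<open>simp add: Measurable.pred_def\<close>)
  show ?thesis by (intro borel_measurable_times_ennreal measurable_compose[OF cm psi]) measurable
qed

lemma finite_int:
  assumes C[measurable]: "C \<in> sets Om"
  shows "psi \<in> borel_measurable Om \<Longrightarrow>
    (\<integral>\<^sup>+\<omega>. indicator {\<omega>. \<forall>k\<in>{1..m}. \<omega> k \<notin> C} \<omega> * psi (\<omega> m) \<partial>IT.C 0 (Suc m) (\<lambda>_. undefined)) = (T C ^^ m) psi w0"
proof (induction m arbitrary: psi)
  case 0
  note [measurable] = 0
  have u: "(\<lambda>_. undefined) \<in> space (PiM {0..<0::nat} (\<lambda>_. Om))" by (simp add: space_PiM PiE_def extensional_def Pi_def)
  have "IT.C 0 (Suc 0) (\<lambda>_. undefined) = return (PiM {0..<0::nat} (\<lambda>_. Om)) (\<lambda>_. undefined) \<bind> IT.eP 0"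
    by (simp only: IT.C.simps add_0)
  also have "\<dots> = IT.eP 0 (\<lambda>_. undefined)"
    by (rule bind_return[OF IT.measurable_eP u])
  finally have "IT.C 0 (Suc 0) (\<lambda>_. undefined) = IT.eP 0 (\<lambda>_. undefined)" .
  then have "(\<integral>\<^sup>+\<omega>. indicator {\<omega>. \<forall>k\<in>{1..0::nat}. \<omega> k \<notin> C} \<omega> * psi (\<omega> 0) \<partial>IT.C 0 (Suc 0) (\<lambda>_. undefined))
      = (\<integral>\<^sup>+\<omega>. psi (\<omega> 0) \<partial>IT.eP 0 (\<lambda>_. undefined))" by simp
  also have "\<dots> = (\<integral>\<^sup>+x. psi x \<partial>return Om w0)"
    using u by (subst IT.nn_integral_eP) (auto simp: Kc_def)
  also have "\<dots> = psi w0" using w0 by (simp add: nn_integral_return)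
  finally show ?case by simp
next
  case (Suc m)
  note [measurable] = Suc.prems
  let ?F = "\<lambda>\<omega>. indicator {\<omega>. \<forall>k\<in>{1..Suc m}. \<omega> k \<notin> C} \<omega> * psi (\<omega> (Suc m))"
  have Fm: "?F \<in> borel_measurable (PiM {0..<Suc (Suc m)} (\<lambda>_. Om))"
    by (rule F_meas) simp_all
  have u: "(\<lambda>_. undefined) \<in> space (PiM {0..<0::nat} (\<lambda>_. Om))" by (simp add: space_PiM PiE_def extensional_def Pi_def)
  have "(\<integral>\<^sup>+\<omega>. ?F \<omega> \<partial>IT.C 0 (Suc (Suc m)) (\<lambda>_. undefined))
     = (\<integral>\<^sup>+\<omega>. ?F \<omega> \<partial>(IT.C 0 (Suc m) (\<lambda>_. undefined) \<bind> IT.eP (Suc m)))"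
    by simp
  also have "\<dots> = (\<integral>\<^sup>+\<omega>. (\<integral>\<^sup>+\<omega>'. ?F \<omega>' \<partial>IT.eP (Suc m) \<omega>) \<partial>IT.C 0 (Suc m) (\<lambda>_. undefined))"
  proof (rule nn_integral_bind[OF Fm])
    show "IT.eP (Suc m) \<in> IT.C 0 (Suc m) (\<lambda>_. undefined) \<rightarrow>\<^sub>M subprob_algebra (Pi\<^sub>M {0..<Suc (Suc m)} (\<lambda>_. Om))"
      using IT.measurable_eP[of "Suc m"] by (subst measurable_cong_sets[OF IT.sets_C[OF u] refl]) simp
  qed
  also have "\<dots> = (\<integral>\<^sup>+\<omega>. indicator {\<omega>. \<forall>k\<in>{1..m}. \<omega> k \<notin> C} \<omega> * T C psi (\<omega> m) \<partial>IT.C 0 (Suc m) (\<lambda>_. undefined))"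
  proof (intro nn_integral_cong)
    fix \<omega> assume "\<omega> \<in> space (IT.C 0 (Suc m) (\<lambda>_. undefined))"
    then have om: "\<omega> \<in> space (PiM {0..<Suc m} (\<lambda>_. Om))" using IT.space_C[OF u, of "Suc m"] by (simp del: IT.C.simps)
    then have omm: "\<omega> m \<in> space Om" by (auto simp: space_PiM)
    have "(\<integral>\<^sup>+\<omega>'. ?F \<omega>' \<partial>IT.eP (Suc m) \<omega>) = (\<integral>\<^sup>+x. ?F (fun_upd \<omega> (Suc m) x) \<partial>Kc (Suc m) \<omega>)"
      by (rule IT.nn_integral_eP[OF om Fm])
    also have "\<dots> = (\<integral>\<^sup>+x. indicator {\<omega>. \<forall>k\<in>{1..m}. \<omega> k \<notin> C} \<omega> * (indicator (- C) x * psi x) \<partial>R (\<omega> m))"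
      unfolding Kc_def by (simp, intro nn_integral_cong) (auto simp: indicator_def atLeastAtMostSuc_conv)
    also have "\<dots> = indicator {\<omega>. \<forall>k\<in>{1..m}. \<omega> k \<notin> C} \<omega> * (\<integral>\<^sup>+x. indicator (- C) x * psi x \<partial>R (\<omega> m))"
      by (rule nn_integral_cmult) (simp add: measurable_cong_sets[OF sets_R[OF omm] refl])
    also have "\<dots> = indicator {\<omega>. \<forall>k\<in>{1..m}. \<omega> k \<notin> C} \<omega> * T C psi (\<omega> m)"
      using omm by (simp add: T_def RI_def)
    finally show "(\<integral>\<^sup>+\<omega>'. ?F \<omega>' \<partial>IT.eP (Suc m) \<omega>) = indicator {\<omega>. \<forall>k\<in>{1..m}. \<omega> k \<notin> C} \<omega> * T C psi (\<omega> m)" .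
  qed
  also have "\<dots> = (T C ^^ m) (T C psi) w0" by (rule Suc.IH) simp
  also have "\<dots> = (T C ^^ Suc m) psi w0" by (simp add: funpow_swap1)
  finally show ?case .
qed

lemma finite_avoid:
  assumes C[measurable]: "C \<in> sets Om"
  shows "emeasure (IT.C 0 (Suc m) (\<lambda>_. undefined)) {\<omega> \<in> space (PiM {0..<Suc m} (\<lambda>_. Om)). \<forall>k\<in>{1..m}. \<omega> k \<notin> C}
    = (T C ^^ m) (\<lambda>_. 1) w0"
proof -
  have u: "(\<lambda>_. undefined) \<in> space (PiM {0..<0::nat} (\<lambda>_. Om))" by (simp add: space_PiM PiE_def extensional_def Pi_def)
  have sp: "space (IT.C 0 (Suc m) (\<lambda>_. undefined)) = space (PiM {0..<Suc m} (\<lambda>_. Om))"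
    using IT.space_C[OF u, of "Suc m"] by (simp del: IT.C.simps)
  have p: "Measurable.pred (PiM {0..<Suc m} (\<lambda>_. Om)) (\<lambda>\<omega>. \<forall>k\<in>{1..m}. \<omega> k \<notin> C)"
    by (rule avoid_pred) auto
  have S: "{\<omega> \<in> space (PiM {0..<Suc m} (\<lambda>_. Om)). \<forall>k\<in>{1..m}. \<omega> k \<notin> C} \<in> sets (IT.C 0 (Suc m) (\<lambda>_. undefined))"
    using p IT.sets_C[OF u, of "Suc m"] by (simp del: IT.C.simps add: Measurable.pred_def)
  have "emeasure (IT.C 0 (Suc m) (\<lambda>_. undefined)) {\<omega> \<in> space (PiM {0..<Suc m} (\<lambda>_. Om)). \<forall>k\<in>{1..m}. \<omega> k \<notin> C}
     = (\<integral>\<^sup>+\<omega>. indicator {\<omega> \<in> space (PiM {0..<Suc m} (\<lambda>_. Om)). \<forall>k\<in>{1..m}. \<omega> k \<notin> C} \<omega> \<partial>IT.C 0 (Suc m) (\<lambda>_. undefined))"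
    using S by simp
  also have "\<dots> = (\<integral>\<^sup>+\<omega>. indicator {\<omega>. \<forall>k\<in>{1..m}. \<omega> k \<notin> C} \<omega> * (\<lambda>_. 1::ennreal) (\<omega> m) \<partial>IT.C 0 (Suc m) (\<lambda>_. undefined))"
    by (intro nn_integral_cong) (simp del: IT.C.simps add: sp indicator_def)
  also have "\<dots> = (T C ^^ m) (\<lambda>_. 1) w0"
    by (rule finite_int[OF C]) simp
  finally show ?thesis .
qed

end

context rchain
begin

lemma RI_cong: "w \<in> space Om \<Longrightarrow> (\<And>y. y \<in> space Om \<Longrightarrow> f y = g y) \<Longrightarrow> RI f w = RI g w"
  unfolding RI_def by (auto intro!: nn_integral_cong simp: sets_eq_imp_space_eq[OF sets_R])

lemma T_fs:
  assumes C[measurable]: "C \<in> sets Om"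
  shows "w \<in> space Om \<Longrightarrow> (T C ^^ Suc n) (\<lambda>_. 1) w = 1 - RI (fs C n) w"
proof (induction n arbitrary: w)
  case 0
  have e: "(\<lambda>y. indicator (- C) y * (1::ennreal)) = (\<lambda>y. 1 - indicator C y)"
    by (auto simp: fun_eq_iff indicator_def)
  have "(T C ^^ Suc 0) (\<lambda>_. 1) w = RI (\<lambda>y. 1 - indicator C y) w"
    by (simp only: funpow.simps comp_apply id_apply T_def e)
  also have "\<dots> = 1 - RI (fs C 0) w"
    using 0 by (subst RI_compl) (auto simp: indicator_def)
  finally show ?case .
next
  case (Suc n)
  have "(T C ^^ Suc (Suc n)) (\<lambda>_. 1) w = RI (\<lambda>y. indicator (- C) y * (T C ^^ Suc n) (\<lambda>_. 1) y) w"
    by (simp add: T_def)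
  also have "\<dots> = RI (\<lambda>y. 1 - fs C (Suc n) y) w"
  proof (rule RI_cong[OF Suc.prems])
    fix y assume y: "y \<in> space Om"
    show "indicator (- C) y * (T C ^^ Suc n) (\<lambda>_. 1) y = 1 - fs C (Suc n) y"
      using Suc.IH[OF y] by (cases "y \<in> C") (simp_all del: funpow.simps)
  qed
  also have "\<dots> = 1 - RI (fs C (Suc n)) w"
    using Suc.prems by (subst RI_compl) (auto intro: fs_le1[OF C] simp del: fs.simps)
  finally show ?case .
qed

end

context rchain_start
begin

lemma return_prob:
  assumes C[measurable]: "C \<in> sets Om"
  shows "emeasure (chain_law Om R w0) (return_event Om C) = RI (fsup C) w0"
proof -
  have u: "(\<lambda>_. undefined) \<in> space (PiM {0..<0::nat} (\<lambda>_. Om))" by (simp add: space_PiM PiE_def extensional_def Pi_def)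
  define H' where "H' n = {\<omega> \<in> space (PiM {0..<Suc (Suc n)} (\<lambda>_. Om)). \<exists>k\<in>{1..Suc n}. \<omega> k \<in> C}" for n
  define A' where "A' n = {\<omega> \<in> space (PiM {0..<Suc (Suc n)} (\<lambda>_. Om)). \<forall>k\<in>{1..Suc n}. \<omega> k \<notin> C}" for n
  define H where "H n = {\<omega> \<in> space (PiM UNIV (\<lambda>_. Om)). \<exists>k\<in>{1..Suc n}. \<omega> k \<in> C}" for n
  have A'sets: "A' n \<in> sets (PiM {0..<Suc (Suc n)} (\<lambda>_. Om))" for n
    using avoid_pred[OF C, of "Suc n" "Suc (Suc n)"] unfolding A'_def by (simp add: Measurable.pred_def)
  have H'A': "H' n = space (PiM {0..<Suc (Suc n)} (\<lambda>_. Om)) - A' n" for n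
    unfolding H'_def A'_def by auto
  have H'sets: "H' n \<in> sets (PiM {0..<Suc (Suc n)} (\<lambda>_. Om))" for n
    unfolding H'A' using A'sets by auto
  have Hemb: "H n = IT.PF.emb UNIV {0..<Suc (Suc n)} (H' n)" for n
    unfolding H_def H'_def prod_emb_def by (auto simp: space_PiM PiE_iff)
  have Hsets: "H n \<in> sets (PiM UNIV (\<lambda>_. Om))" for n
    unfolding Hemb using H'sets by auto
  have HP: "emeasure IT.PF.lim (H n) = RI (fs C n) w0" for n
  proof -
    have "emeasure IT.PF.lim (H n) = emeasure (IT.CI {0..<Suc (Suc n)}) (H' n)"
      unfolding Hemb by (rule IT.lim) (auto simp: H'sets)
    also have "\<dots> = emeasure (IT.C 0 (Suc (Suc n)) (\<lambda>_. undefined)) (IT.PF.emb {0..<Suc (Suc n)} {0..<Suc (Suc n)} (H' n))"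
      by (rule IT.emeasure_CI) (auto simp: H'sets)
    also have "IT.PF.emb {0..<Suc (Suc n)} {0..<Suc (Suc n)} (H' n) = H' n"
      by (rule prod_emb_id) (auto simp: H'_def space_PiM)
    also have "emeasure (IT.C 0 (Suc (Suc n)) (\<lambda>_. undefined)) (H' n)
        = emeasure (IT.C 0 (Suc (Suc n)) (\<lambda>_. undefined)) (space (IT.C 0 (Suc (Suc n)) (\<lambda>_. undefined)) - A' n)"
      unfolding H'A' using IT.space_C[OF u, of "Suc (Suc n)"] by (simp del: IT.C.simps)
    also have "\<dots> = 1 - emeasure (IT.C 0 (Suc (Suc n)) (\<lambda>_. undefined)) (A' n)"
    proof -
      interpret pC: prob_space "IT.C 0 (Suc (Suc n)) (\<lambda>_. undefined)"
        using IT.prob_space_C[OF u] .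
      show ?thesis
        using A'sets[of n] IT.sets_C[OF u, of "Suc (Suc n)"]
        by (subst emeasure_compl) (simp_all del: IT.C.simps add: pC.emeasure_space_1)
    qed
    also have "emeasure (IT.C 0 (Suc (Suc n)) (\<lambda>_. undefined)) (A' n) = (T C ^^ Suc n) (\<lambda>_. 1) w0"
      unfolding A'_def by (rule finite_avoid[OF C])
    also have "\<dots> = 1 - RI (fs C n) w0" by (rule T_fs[OF C w0])
    also have "1 - (1 - RI (fs C n) w0) = RI (fs C n) w0"
      by (rule diff_diff_ennreal) (auto intro: RI_le1 fs_le1[OF C])
    finally show ?thesis .
  qed
  have ret: "return_event Om C = (\<Union>n. H n)"
  proof (intro set_eqI iffI)
    fix \<omega> assume "\<omega> \<in> return_event Om C"
    then obtain n where n: "n \<ge> 1" "\<omega> n \<in> C" "\<omega> \<in> space (PiM UNIV (\<lambda>_. Om))"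
      unfolding return_event_def by auto
    then have "\<omega> \<in> H (n - 1)" unfolding H_def by (intro CollectI conjI bexI[of _ n]) auto
    then show "\<omega> \<in> (\<Union>n. H n)" by blast
  next
    fix \<omega> assume "\<omega> \<in> (\<Union>n. H n)"
    then show "\<omega> \<in> return_event Om C" unfolding return_event_def H_def by auto
  qed
  have inc: "incseq H"
    by (rule incseq_SucI) (auto simp: H_def)
  have "emeasure IT.PF.lim (\<Union>n. H n) = (SUP n. emeasure IT.PF.lim (H n))"
    by (rule SUP_emeasure_incseq[symmetric]) (use Hsets inc in auto)
  also have "\<dots> = (SUP n. RI (fs C n) w0)" by (simp add: HP)
  also have "\<dots> = RI (fsup C) w0" by (rule RI_fsup[OF C, symmetric])
  finally show ?thesis unfolding chain_law_eq ret .
qed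

end

context rchain
begin

lemma return_prob':
  assumes "w0 \<in> space Om" "C \<in> sets Om"
  shows "emeasure (chain_law Om R w0) (return_event Om C) = RI (fsup C) w0"
proof -
  interpret S: rchain_start Om X mu M P Q w0 by unfold_locales (rule assms(1))
  show ?thesis by (rule S.return_prob[OF assms(2)])
qed

lemma lr_set_iff:
  assumes pr: "proper_set mu C"
  shows "locally_recurrent_set Om R mu C \<longleftrightarrow> (AE w in mu. w \<in> C \<longrightarrow> RI (fsup C) w = 1)"
proof -
  have C[measurable]: "C \<in> sets Om" using pr mu_sets by (simp add: proper_set_def)
  have "(AE w in mu. w \<in> C \<longrightarrow> \<not> (emeasure (chain_law Om R w) (return_event Om C) < 1))
     \<longleftrightarrow> (AE w in mu. w \<in> C \<longrightarrow> RI (fsup C) w = 1)"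
  proof (rule AE_cong)
    fix w assume w: "w \<in> space mu"
    then have w': "w \<in> space Om" by (simp add: space_mu)
    have le: "RI (fsup C) w \<le> 1" by (rule RI_le1) (auto intro: fsup_le1[OF C])
    show "(w \<in> C \<longrightarrow> \<not> emeasure (chain_law Om R w) (return_event Om C) < 1) = (w \<in> C \<longrightarrow> RI (fsup C) w = 1)"
      using le by (auto simp: return_prob'[OF w' C] not_less)
  qed
  then show ?thesis using pr by (simp add: locally_recurrent_set_def)
qed

end

theorem theorem3p4:
  fixes P :: "'th::polish_space \<Rightarrow> 'x::polish_space measure"
    and \<nu> :: "'th measure" and M :: "'x measure" and Q :: "'x \<Rightarrow> 'th measure"
    and t :: "'th \<Rightarrow> real" and A :: "nat \<Rightarrow> real set"
    and \<pi> :: "real \<Rightarrow> 'th measure" and Qt :: "'x \<Rightarrow> real measure"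
    and s :: "real measure" and Pt :: "real \<Rightarrow> 'x measure"
  assumes P_kernel: "P \<in> borel \<rightarrow>\<^sub>M prob_algebra borel"
    and nu_sets: "sets \<nu> = sets borel" and nu_sf: "sigma_finite_measure \<nu>"
    and M_sets: "sets M = sets borel"
    and M_def: "\<forall>B \<in> sets borel. emeasure M B = (\<integral>\<^sup>+ \<theta>. emeasure (P \<theta>) B \<partial>\<nu>)"
    and M_sf: "sigma_finite_measure M"
    and Q_kernel: "Q \<in> borel \<rightarrow>\<^sub>M prob_algebra borel"
    and Q_joint: "\<forall>C \<in> sets borel. \<forall>B \<in> sets borel.
        (\<integral>\<^sup>+ \<theta>. indicator C \<theta> * emeasure (P \<theta>) B \<partial>\<nu>) = (\<integral>\<^sup>+ x. indicator B x * emeasure (Q x) C \<partial>M)"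
    and t_meas: "t \<in> borel_measurable borel" and t_nonneg: "\<forall>\<theta>. 0 \<le> t \<theta>"
    and s_def: "s = distr \<nu> nonneg_reals t"
    and A_sets: "\<forall>i. A i \<in> sets borel" and A_disj: "disjoint_family A"
    and A_cover: "(\<Union>i. A i) = {0..}"
    and A_proper: "\<forall>i. 0 < emeasure \<nu> (t -` A i) \<and> emeasure \<nu> (t -` A i) < \<infinity>"
    and pi_kernel: "\<pi> \<in> nonneg_reals \<rightarrow>\<^sub>M prob_algebra borel"
    and pi_disint: "\<forall>f1 \<in> borel_measurable (borel :: 'th measure). \<forall>f2 \<in> borel_measurable nonneg_reals.
        (\<integral>\<^sup>+ \<theta>. f2 (t \<theta>) * f1 \<theta> \<partial>\<nu>) = (\<integral>\<^sup>+ a. f2 a * (\<integral>\<^sup>+ \<theta>. f1 \<theta> \<partial>\<pi> a) \<partial>s)"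
    and Pt_def: "\<forall>a. Pt a = bind (\<pi> a) P"
    and Qt_kernel: "Qt \<in> borel \<rightarrow>\<^sub>M prob_algebra nonneg_reals"
    and Qt_joint: "\<forall>C \<in> sets nonneg_reals. \<forall>B \<in> sets borel.
        (\<integral>\<^sup>+ a. indicator C a * emeasure (Pt a) B \<partial>s) = (\<integral>\<^sup>+ x. indicator B x * emeasure (Qt x) C \<partial>M)"
    and tilde_rec: "locally_recurrent nonneg_reals (\<lambda>b. bind (Pt b) Qt) s"
  shows "locally_recurrent borel (\<lambda>\<eta>. bind (P \<eta>) Q) \<nu>"
proof -
  interpret O: rchain borel borel \<nu> M P Q
    using P_kernel Q_kernel nu_sets M_sets Q_joint by unfold_locales auto
  have Pt_eq: "Pt = (\<lambda>a. \<pi> a \<bind> P)" using Pt_def by auto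
  have Pt_k: "Pt \<in> nonneg_reals \<rightarrow>\<^sub>M prob_algebra borel"
    unfolding Pt_eq by (rule measurable_bind_prob_space[OF pi_kernel P_kernel])
  have s_sets: "sets s = sets nonneg_reals" by (simp add: s_def)
  interpret Rt: rchain nonneg_reals borel s M Pt Qt
    using Pt_k Qt_kernel s_sets M_sets Qt_joint by unfold_locales auto
  have ORe: "(\<lambda>\<eta>. P \<eta> \<bind> Q) = O.R" by (simp add: fun_eq_iff O.R_def)
  have RRe: "(\<lambda>b. Pt b \<bind> Qt) = Rt.R" by (simp add: fun_eq_iff Rt.R_def)
  have space_nu: "space \<nu> = UNIV" using sets_eq_imp_space_eq[OF nu_sets] by simp
  have space_nn: "space nonneg_reals = {0..}" by (simp add: nonneg_reals_def space_restrict_space)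
  have sets_nn: "D \<in> sets nonneg_reals \<longleftrightarrow> D \<in> sets borel \<and> D \<subseteq> {0..}" for D
    unfolding nonneg_reals_def by (subst sets_restrict_space_iff) auto
  have t_nn[measurable]: "t \<in> borel \<rightarrow>\<^sub>M nonneg_reals"
    unfolding nonneg_reals_def by (rule measurable_restrict_space2) (use t_meas t_nonneg in auto)
  have t_nn': "t \<in> \<nu> \<rightarrow>\<^sub>M nonneg_reals" using t_nn by (simp add: measurable_cong_sets[OF nu_sets refl])
  have s_emeas: "emeasure s D = emeasure \<nu> (t -` D)" if "D \<in> sets nonneg_reals" for D
    using that by (simp add: s_def emeasure_distr[OF t_nn'] space_nu)
  have tA: "t -` B \<in> sets borel" if "B \<in> sets borel" for B
    using measurable_sets_borel[OF t_meas that] by simp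
  define D where "D k = (\<Union>i\<le>k. A i)" for k
  have A_sub: "A i \<subseteq> {0..}" for i using A_cover by auto
  have D_sets: "D k \<in> sets nonneg_reals" for k
    unfolding sets_nn D_def using A_sets A_sub by auto
  have D_proper: "proper_set s (D k)" for k
  proof -
    have "emeasure \<nu> (t -` D k) \<le> (\<Sum>i\<le>k. emeasure \<nu> (t -` A i))"
      unfolding D_def vimage_UN
      by (rule emeasure_subadditive_finite) (use A_sets tA in \<open>auto simp: nu_sets\<close>)
    also have "\<dots> < \<infinity>" using A_proper by (simp add: less_top[symmetric])
    finally have fin: "emeasure s (D k) < \<infinity>" using s_emeas[OF D_sets] by simp
    have "emeasure \<nu> (t -` A 0) \<le> emeasure \<nu> (t -` D k)"
      by (rule emeasure_mono) (use A_sets tA in \<open>auto simp: D_def nu_sets\<close>)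
    then have pos: "0 < emeasure s (D k)" using A_proper s_emeas[OF D_sets] by (metis order.strict_trans2)
    show ?thesis using fin pos D_sets s_sets by (simp add: proper_set_def)
  qed
  have D_rec: "AE a in s. a \<in> D k \<longrightarrow> Rt.RI (Rt.fsup (D k)) a = 1" for k
    using tilde_rec D_proper[of k] Rt.lr_set_iff[OF D_proper[of k]]
    by (simp add: locally_recurrent_def RRe)
  have trans: "AE x in M. (\<integral>\<^sup>+\<theta>. g (t \<theta>) \<partial>Q x) = (\<integral>\<^sup>+a. g a \<partial>Qt x)"
    if g[measurable]: "g \<in> borel_measurable nonneg_reals" for g :: "real \<Rightarrow> ennreal"
  proof -
    interpret Msf: sigma_finite_measure M by (rule M_sf)
    show ?thesis
    proof (rule Msf.density_unique2)
      show "(\<lambda>x. \<integral>\<^sup>+\<theta>. g (t \<theta>) \<partial>Q x) \<in> borel_measurable M"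
        unfolding measurable_cong_sets[OF M_sets refl] by measurable
      show "(\<lambda>x. \<integral>\<^sup>+a. g a \<partial>Qt x) \<in> borel_measurable M"
        unfolding measurable_cong_sets[OF M_sets refl] by measurable
    next
      fix B assume B: "B \<in> sets M"
      then have B'[measurable]: "B \<in> sets borel" by (simp add: M_sets)
      have "(\<integral>\<^sup>+x\<in>B. (\<integral>\<^sup>+\<theta>. g (t \<theta>) \<partial>Q x) \<partial>M) = (\<integral>\<^sup>+x. indicator B x * (\<integral>\<^sup>+\<theta>. g (t \<theta>) \<partial>Q x) \<partial>M)"
        by (simp add: mult.commute)
      also have "\<dots> = (\<integral>\<^sup>+\<theta>. g (t \<theta>) * (\<integral>\<^sup>+x. indicator B x \<partial>P \<theta>) \<partial>\<nu>)"
        by (rule O.joint2[symmetric]) measurable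
      also have "\<dots> = (\<integral>\<^sup>+\<theta>. g (t \<theta>) * emeasure (P \<theta>) B \<partial>\<nu>)"
        by (intro nn_integral_cong) (simp add: O.sets_P)
      also have "\<dots> = (\<integral>\<^sup>+a. g a * (\<integral>\<^sup>+\<theta>. emeasure (P \<theta>) B \<partial>\<pi> a) \<partial>s)"
        by (rule pi_disint[rule_format, OF measurable_emeasure_kernel[OF O.P_sub B'] g])
      also have "\<dots> = (\<integral>\<^sup>+a. g a * (\<integral>\<^sup>+x. indicator B x \<partial>Pt a) \<partial>s)"
      proof (intro nn_integral_cong)
        fix a assume a: "a \<in> space s"
        then have a': "a \<in> space nonneg_reals" by (simp add: s_def)
        have pa: "\<pi> a \<in> space (prob_algebra borel)" using measurable_space[OF pi_kernel a'] .
        have "(\<integral>\<^sup>+x. indicator B x \<partial>Pt a) = emeasure (Pt a) B"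
          using Rt.sets_P[OF a'] by simp
        also have "\<dots> = (\<integral>\<^sup>+\<theta>. emeasure (P \<theta>) B \<partial>\<pi> a)"
          unfolding Pt_eq by (rule emeasure_bind_prob_algebra[OF pa P_kernel B'])
        finally show "g a * (\<integral>\<^sup>+\<theta>. emeasure (P \<theta>) B \<partial>\<pi> a) = g a * (\<integral>\<^sup>+x. indicator B x \<partial>Pt a)" by simp
      qed
      also have "\<dots> = (\<integral>\<^sup>+x. indicator B x * (\<integral>\<^sup>+a. g a \<partial>Qt x) \<partial>M)"
        by (rule Rt.joint2) measurable
      also have "\<dots> = (\<integral>\<^sup>+x\<in>B. (\<integral>\<^sup>+a. g a \<partial>Qt x) \<partial>M)"
        by (simp add: mult.commute)
      finally show "(\<integral>\<^sup>+x\<in>B. (\<integral>\<^sup>+\<theta>. g (t \<theta>) \<partial>Q x) \<partial>M) = (\<integral>\<^sup>+x\<in>B. (\<integral>\<^sup>+a. g a \<partial>Qt x) \<partial>M)" .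
    qed
  qed
  have energy_eq: "(\<integral>\<^sup>+x. ennreal (vr (Q x) (\<lambda>\<theta>. g (t \<theta>))) \<partial>M) = (\<integral>\<^sup>+x. ennreal (vr (Qt x) g) \<partial>M)"
    if g[measurable]: "g \<in> borel_measurable nonneg_reals" for g :: "real \<Rightarrow> ennreal"
  proof (rule nn_integral_cong_AE)
    have g2: "(\<lambda>a. g a * g a) \<in> borel_measurable nonneg_reals" by measurable
    show "AE x in M. ennreal (vr (Q x) (\<lambda>\<theta>. g (t \<theta>))) = ennreal (vr (Qt x) g)"
      using trans[OF g] trans[OF g2] by eventually_elim (simp add: vr_def)
  qed
  have main: "locally_recurrent_set borel O.R \<nu> C" if pr: "proper_set \<nu> C" for C
  proof -
    have C[measurable]: "C \<in> sets borel" using pr nu_sets by (simp add: proper_set_def)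
    have Cfin: "emeasure \<nu> C < \<infinity>" using pr by (simp add: proper_set_def)
    have Z0: "(\<integral>\<^sup>+w. indicator (t -` D k) w * (indicator C w * (1 - O.RI (O.fsup C) w)) \<partial>\<nu>) = 0" for k
    proof -
      define Z where "Z = (\<integral>\<^sup>+w. indicator (t -` D k) w * (indicator C w * (1 - O.RI (O.fsup C) w)) \<partial>\<nu>)"
      define eps where "eps n = (\<integral>\<^sup>+a. indicator (D k) a * (1 - Rt.RI (Rt.fs (D k) n) a) \<partial>s)" for n
      have Dk[measurable]: "D k \<in> sets nonneg_reals" by (rule D_sets)
      have sDfin: "emeasure s (D k) < \<infinity>" using D_proper[of k] by (simp add: proper_set_def)
      have bound: "Z \<le> ennreal (lam / 2) * eps n + ennreal (1 / (2 * lam)) * emeasure \<nu> C" if lam: "lam > 0" for lam n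
      proof -
        define h where "h \<theta> = Rt.fs (D k) n (t \<theta>)" for \<theta>
        have h[measurable]: "h \<in> borel_measurable borel" unfolding h_def by measurable
        have hb: "h w \<le> 1" for w unfolding h_def by (rule Rt.fs_le1[OF Dk])
        have hint: "(\<integral>\<^sup>+w. h w \<partial>\<nu>) < \<infinity>"
        proof -
          have "(\<integral>\<^sup>+w. h w \<partial>\<nu>) = (\<integral>\<^sup>+a. Rt.fs (D k) n a \<partial>s)"
            unfolding h_def s_def by (rule nn_integral_distr[symmetric, OF t_nn']) simp
          also have "\<dots> \<le> of_nat (Suc n) * emeasure s (D k)" by (rule Rt.fs_int[OF Dk])
          also have "\<dots> < \<infinity>" using sDfin by (simp add: ennreal_mult_less_top of_nat_less_top)
          finally show ?thesis .
        qed
        have "Z \<le> (\<integral>\<^sup>+w. h w * (indicator C w * (1 - O.RI (O.fsup C) w)) \<partial>\<nu>)"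
          unfolding Z_def
        proof (intro nn_integral_mono mult_right_mono)
          fix w show "indicator (t -` D k) w \<le> h w"
            by (cases "t w \<in> D k") (simp_all add: h_def Rt.fs_inC)
        qed simp
        also have "\<dots> \<le> ennreal (lam / 2) * (\<integral>\<^sup>+x. ennreal (vr (Q x) h) \<partial>M) + ennreal (1 / (2 * lam)) * emeasure \<nu> C"
          by (rule O.escape_bound[OF C Cfin h hb hint lam])
        also have "(\<integral>\<^sup>+x. ennreal (vr (Q x) h) \<partial>M) = (\<integral>\<^sup>+x. ennreal (vr (Qt x) (Rt.fs (D k) n)) \<partial>M)"
          unfolding h_def by (rule energy_eq) simp
        also have "\<dots> \<le> eps n" unfolding eps_def by (rule Rt.energy_fs[OF Dk sDfin])
        finally show ?thesis by (simp add: mult_left_mono add_right_mono)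
      qed
      have eps0: "eps \<longlonglongrightarrow> 0"
        unfolding eps_def by (rule Rt.rec_tendsto[OF Dk sDfin D_rec])
      have bound2: "Z \<le> ennreal (1 / (2 * lam)) * emeasure \<nu> C" if lam: "lam > 0" for lam
      proof -
        have "(\<lambda>n. ennreal (lam / 2) * eps n + ennreal (1 / (2 * lam)) * emeasure \<nu> C)
            \<longlonglongrightarrow> ennreal (lam / 2) * 0 + ennreal (1 / (2 * lam)) * emeasure \<nu> C"
          by (intro tendsto_add tendsto_mult_ennreal tendsto_const eps0) simp
        then have "Z \<le> ennreal (lam / 2) * 0 + ennreal (1 / (2 * lam)) * emeasure \<nu> C"
          by (rule tendsto_lowerbound) (use bound[OF lam] in auto)
        then show ?thesis by simp
      qed
      obtain c where c: "emeasure \<nu> C = ennreal c" "c \<ge> 0"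
        using Cfin by (cases "emeasure \<nu> C") auto
      have "Z \<le> 0"
      proof (rule ennreal_le_epsilon)
        fix e :: real assume e: "0 < e"
        define lam where "lam = (c + 1) / (2 * e)"
        have lam: "lam > 0" using e c by (simp add: lam_def)
        have "Z \<le> ennreal (1 / (2 * lam)) * ennreal c" using bound2[OF lam] c by simp
        also have "\<dots> = ennreal (c * e / (c + 1))"
          using e c by (simp add: ennreal_mult[symmetric] lam_def field_simps)
        also have "\<dots> \<le> ennreal e"
          using e c by (intro ennreal_leI) (simp add: field_simps)
        finally show "Z \<le> 0 + ennreal e" by simp
      qed
      then show ?thesis unfolding Z_def by simp
    qed
    have ae: "AE w in \<nu>. \<forall>k. indicator (t -` D k) w * (indicator C w * (1 - O.RI (O.fsup C) w)) = 0"
    proof (subst AE_all_countable, intro allI)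
      fix k
      have tD: "t -` D k \<in> sets borel" using D_sets[of k] tA by (simp add: sets_nn)
      show "AE w in \<nu>. indicator (t -` D k) w * (indicator C w * (1 - O.RI (O.fsup C) w)) = 0"
        using Z0[of k] by (subst (asm) nn_integral_0_iff_AE)
          (use tD in \<open>auto simp: measurable_cong_sets[OF nu_sets refl]\<close>)
    qed
    have "AE w in \<nu>. w \<in> C \<longrightarrow> O.RI (O.fsup C) w = 1"
      using ae
    proof eventually_elim
      case (elim w)
      show ?case
      proof
        assume wC: "w \<in> C"
        have "t w \<in> (\<Union>i. A i)" using A_cover t_nonneg by auto
        then obtain i where "t w \<in> A i" by auto
        then have "t w \<in> D i" by (auto simp: D_def)
        with elim wC have "1 - O.RI (O.fsup C) w = 0" by (auto dest: spec[of _ i])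
        then have "1 \<le> O.RI (O.fsup C) w" by (rule ennreal_minus_eq_0)
        moreover have "O.RI (O.fsup C) w \<le> 1" by (rule O.RI_le1) (auto intro: O.fsup_le1[OF C])
        ultimately show "O.RI (O.fsup C) w = 1" by simp
      qed
    qed
    then show ?thesis using O.lr_set_iff[OF pr] by simp
  qed
  show ?thesis unfolding locally_recurrent_def ORe using main by blast
qed

end
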